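(* Let $A_1,B_1,A_2,B_2$ be smooth $\mathbb{R}_{0,m}$-valued functions depending only on $\underline{y}$. The function $$(\cos z)A_1(\underline{y})+(\sin z)B_1(\underline{y})+(\cos\overline{z})A_2(\underline{y})+(\sin\overline{z})B_2(\underline{y})$$ is two-sided monogenic if and only if $A_1$ and $B_1$ are harmonic and satisfy the system $$A_1\partial_{\underline{y}}+B_1+e_1B_1e_1=0,\qquad B_1\partial_{\underline{y}}-A_1-e_1A_1e_1=0,$$ and $A_2=\frac{1}{2}\partial_{\underline{y}}B_1$, $B_2=-\frac{1}{2}\partial_{\underline{y}}A_1$. In particular, if $M(\underline{y})$ and $N(\underline{y})$ are right monogenic functions of $\underline{y}$ (i.e. $M\partial_{\underline{y}}=N\partial_{\underline{y}}=0$), then $$(\cos z)(M-e_1Me_1)+(\sin z)(N-e_1Ne_1)+\frac{1}{2}(\cos\overline{z})(\partial_{\underline{y}}N+e_1(\partial_{\underline{y}}N)e_1)-\frac{1}{2}(\sin\overline{z})(\partial_{\underline{y}}M+e_1(\partial_{\underline{y}}M)e_1)$$ is two-sided monogenic.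
   Context: Let $m\ge 2$ and let $\mathbb{R}_{0,m}$ be the real Clifford algebra generated by $e_1,\dots,e_m$ with $e_i^2=-1$ and $e_ie_j=-e_je_i$ for $i\neq j$; all products are Clifford products. Identify $(x_0,\dots,x_m)\in\mathbb{R}^{m+1}$ with $X=x_0+\sum_{j=1}^m x_je_j$, and write $z=x_0+x_1e_1$, $\overline{z}=x_0-x_1e_1$, $\underline{y}=\sum_{j=2}^m x_je_j$. The subalgebra spanned by $1,e_1$ is identified with $\mathbb{C}$ via $i\mapsto e_1$, and $\cos z,\sin z,\cos\overline z,\sin\overline z$ are the complex cosine and sine under this identification. Operators: $\partial_X f=\partial_{x_0}f+\sum_{j=1}^m e_j\partial_{x_j}f$, $f\partial_X=\partial_{x_0}f+\sum_{j=1}^m(\partial_{x_j}f)e_j$, $\partial_{\underline{y}}f=\sum_{j=2}^m e_j\partial_{x_j}f$, $f\partial_{\underline{y}}=\sum_{j=2}^m(\partial_{x_j}f)e_j$. A function is left monogenic if $\partial_Xf=0$, right monogenic if $f\partial_X=0$, two-sided monogenic if both. Harmonic means $\Delta A=0$ with $\Delta=\sum_{j=2}^m\partial_{x_j}^2=-\partial_{\underline{y}}^2$. *)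

theory Defs
  imports "HOL-Analysis.Analysis"
begin

text \<open>Elements of the Clifford algebra R_{0,m} are represented by their coordinates
  with respect to the basis e_A, A a subset of {1..m}: a function cl :: nat set => real
  which vanishes outside Pow {1..m}.  Points of R^{m+1} are functions nat => real,
  coordinate j being x j (only coordinates 0..m are relevant).\<close>

type_synonym cl = "nat set \<Rightarrow> real"
type_synonym pt = "nat \<Rightarrow> real"

definition cl_in :: "nat \<Rightarrow> cl \<Rightarrow> bool" where
  "cl_in m a \<longleftrightarrow> (\<forall>A. \<not> A \<subseteq> {1..m} \<longrightarrow> a A = 0)"

definition cl_zero :: cl where "cl_zero = (\<lambda>A. 0)"
definition cl_add :: "cl \<Rightarrow> cl \<Rightarrow> cl" where "cl_add a b = (\<lambda>A. a A + b A)"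
definition cl_sub :: "cl \<Rightarrow> cl \<Rightarrow> cl" where "cl_sub a b = (\<lambda>A. a A - b A)"
definition cl_scale :: "real \<Rightarrow> cl \<Rightarrow> cl" where "cl_scale r a = (\<lambda>A. r * a A)"
definition cl_sum :: "'i set \<Rightarrow> ('i \<Rightarrow> cl) \<Rightarrow> cl" where
  "cl_sum S g = (\<lambda>A. \<Sum>j\<in>S. g j A)"

definition cl_e :: "nat \<Rightarrow> cl" where "cl_e i = (\<lambda>A. if A = {i} then 1 else 0)"

text \<open>Sign in e_A e_B = sign * e_{A symdiff B}, with e_i^2 = -1, e_i e_j = - e_j e_i.\<close>
definition cl_sign :: "nat set \<Rightarrow> nat set \<Rightarrow> real" where
  "cl_sign A B = (-1) ^ (card {(a, b). a \<in> A \<and> b \<in> B \<and> b < a} + card (A \<inter> B))"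

definition cl_mult :: "nat \<Rightarrow> cl \<Rightarrow> cl \<Rightarrow> cl" where
  "cl_mult m a b = (\<lambda>C. \<Sum>A\<in>Pow {1..m}. \<Sum>B\<in>Pow {1..m}.
      if (A - B) \<union> (B - A) = C then cl_sign A B * a A * b B else 0)"

text \<open>Embedding of C = span{1, e_1} (i |-> e_1).\<close>
definition cl_of_complex :: "complex \<Rightarrow> cl" where
  "cl_of_complex w = (\<lambda>A. if A = {} then Re w else if A = {1} then Im w else 0)"

definition zc :: "pt \<Rightarrow> complex" where "zc x = Complex (x 0) (x 1)"
definition zbc :: "pt \<Rightarrow> complex" where "zbc x = cnj (Complex (x 0) (x 1))"

definition pdr :: "nat \<Rightarrow> (pt \<Rightarrow> real) \<Rightarrow> pt \<Rightarrow> real" where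
  "pdr j g x = deriv (\<lambda>t. g (x(j := t))) (x j)"

fun iter_pdr :: "nat list \<Rightarrow> (pt \<Rightarrow> real) \<Rightarrow> pt \<Rightarrow> real" where
  "iter_pdr [] g = g"
| "iter_pdr (j # js) g = pdr j (iter_pdr js g)"

definition smooth_real :: "nat \<Rightarrow> (pt \<Rightarrow> real) \<Rightarrow> bool" where
  "smooth_real m g \<longleftrightarrow> (\<forall>js. set js \<subseteq> {0..m} \<longrightarrow>
      continuous_on UNIV (iter_pdr js g) \<and>
      (\<forall>j\<in>{0..m}. \<forall>x. (\<lambda>t. iter_pdr js g (x(j := t))) differentiable (at (x j))))"

definition smooth_cl :: "nat \<Rightarrow> (pt \<Rightarrow> cl) \<Rightarrow> bool" where
  "smooth_cl m f \<longleftrightarrow> (\<forall>x. cl_in m (f x)) \<and> (\<forall>A. smooth_real m (\<lambda>x. f x A))"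

text \<open>f depends only on y = (x_2, ..., x_m).\<close>
definition depends_only_on_y :: "nat \<Rightarrow> (pt \<Rightarrow> cl) \<Rightarrow> bool" where
  "depends_only_on_y m f \<longleftrightarrow> (\<forall>x x'. (\<forall>j\<in>{2..m}. x j = x' j) \<longrightarrow> f x = f x')"

definition pd :: "nat \<Rightarrow> (pt \<Rightarrow> cl) \<Rightarrow> pt \<Rightarrow> cl" where
  "pd j f x = (\<lambda>A. pdr j (\<lambda>y. f y A) x)"

definition dX_left :: "nat \<Rightarrow> (pt \<Rightarrow> cl) \<Rightarrow> pt \<Rightarrow> cl" where
  "dX_left m f x = cl_add (pd 0 f x) (cl_sum {1..m} (\<lambda>j. cl_mult m (cl_e j) (pd j f x)))"
definition dX_right :: "nat \<Rightarrow> (pt \<Rightarrow> cl) \<Rightarrow> pt \<Rightarrow> cl" where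
  "dX_right m f x = cl_add (pd 0 f x) (cl_sum {1..m} (\<lambda>j. cl_mult m (pd j f x) (cl_e j)))"
definition dY_left :: "nat \<Rightarrow> (pt \<Rightarrow> cl) \<Rightarrow> pt \<Rightarrow> cl" where
  "dY_left m f x = cl_sum {2..m} (\<lambda>j. cl_mult m (cl_e j) (pd j f x))"
definition dY_right :: "nat \<Rightarrow> (pt \<Rightarrow> cl) \<Rightarrow> pt \<Rightarrow> cl" where
  "dY_right m f x = cl_sum {2..m} (\<lambda>j. cl_mult m (pd j f x) (cl_e j))"

definition left_monogenic :: "nat \<Rightarrow> (pt \<Rightarrow> cl) \<Rightarrow> bool" where
  "left_monogenic m f \<longleftrightarrow> (\<forall>x. dX_left m f x = cl_zero)"
definition right_monogenic :: "nat \<Rightarrow> (pt \<Rightarrow> cl) \<Rightarrow> bool" where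
  "right_monogenic m f \<longleftrightarrow> (\<forall>x. dX_right m f x = cl_zero)"
definition two_sided_monogenic :: "nat \<Rightarrow> (pt \<Rightarrow> cl) \<Rightarrow> bool" where
  "two_sided_monogenic m f \<longleftrightarrow> left_monogenic m f \<and> right_monogenic m f"

definition lap_y :: "nat \<Rightarrow> (pt \<Rightarrow> cl) \<Rightarrow> pt \<Rightarrow> cl" where
  "lap_y m f x = cl_sum {2..m} (\<lambda>j. pd j (pd j f) x)"
definition harmonic :: "nat \<Rightarrow> (pt \<Rightarrow> cl) \<Rightarrow> bool" where
  "harmonic m f \<longleftrightarrow> (\<forall>x. lap_y m f x = cl_zero)"

definition trig_combo :: "nat \<Rightarrow> (pt \<Rightarrow> cl) \<Rightarrow> (pt \<Rightarrow> cl) \<Rightarrow> (pt \<Rightarrow> cl) \<Rightarrow> (pt \<Rightarrow> cl) \<Rightarrow> pt \<Rightarrow> cl" where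
  "trig_combo m A1 B1 A2 B2 x =
     cl_add (cl_add (cl_mult m (cl_of_complex (cos (zc x))) (A1 x))
                    (cl_mult m (cl_of_complex (sin (zc x))) (B1 x)))
            (cl_add (cl_mult m (cl_of_complex (cos (zbc x))) (A2 x))
                    (cl_mult m (cl_of_complex (sin (zbc x))) (B2 x)))"

end

theory Submission
  imports Defs "HOL-Library.Function_Algebras"
begin


lemma mixed_box:
  fixes h hs ht Q1 Q2 :: "real \<Rightarrow> real \<Rightarrow> real"
  assumes hs: "\<And>s t. ((\<lambda>s. h s t) has_real_derivative hs s t) (at s)"
    and Q1: "\<And>s t. ((\<lambda>t. hs s t) has_real_derivative Q1 s t) (at t)"
    and ht: "\<And>s t. ((\<lambda>t. h s t) has_real_derivative ht s t) (at t)"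
    and Q2: "\<And>s t. ((\<lambda>s. ht s t) has_real_derivative Q2 s t) (at s)"
    and d: "d > 0"
  shows "\<exists>s1 t1 s2 t2. a < s1 \<and> s1 < a + d \<and> b < t1 \<and> t1 < b + d \<and>
     a < s2 \<and> s2 < a + d \<and> b < t2 \<and> t2 < b + d \<and> Q1 s1 t1 = Q2 s2 t2"
proof -
  define \<Delta> where "\<Delta> = h (a+d) (b+d) - h (a+d) b - h a (b+d) + h a b"
  have "a < a + d" "b < b + d" using d by auto
  obtain s1 where s1: "a < s1" "s1 < a + d"
    and e1: "(h (a+d) (b+d) - h (a+d) b) - (h a (b+d) - h a b) = (a + d - a) * (hs s1 (b+d) - hs s1 b)"
  proof -
    have "\<And>x. ((\<lambda>s. h s (b+d) - h s b) has_real_derivative hs x (b+d) - hs x b) (at x)"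
      by (intro DERIV_diff hs)
    from MVT2[OF \<open>a < a + d\<close>, of "\<lambda>s. h s (b+d) - h s b", OF this] show ?thesis
      using that by auto
  qed
  obtain t1 where t1: "b < t1" "t1 < b + d"
    and e2: "hs s1 (b+d) - hs s1 b = (b + d - b) * Q1 s1 t1"
    using MVT2[OF \<open>b < b + d\<close>, of "\<lambda>t. hs s1 t" "\<lambda>t. Q1 s1 t"] Q1 by auto
  obtain t2 where t2: "b < t2" "t2 < b + d"
    and e3: "(h (a+d) (b+d) - h a (b+d)) - (h (a+d) b - h a b) = (b + d - b) * (ht (a+d) t2 - ht a t2)"
  proof -
    have "\<And>x. ((\<lambda>t. h (a+d) t - h a t) has_real_derivative ht (a+d) x - ht a x) (at x)"
      by (intro DERIV_diff ht)
    from MVT2[OF \<open>b < b + d\<close>, of "\<lambda>t. h (a+d) t - h a t", OF this] show ?thesis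
      using that by auto
  qed
  obtain s2 where s2: "a < s2" "s2 < a + d"
    and e4: "ht (a+d) t2 - ht a t2 = (a + d - a) * Q2 s2 t2"
    using MVT2[OF \<open>a < a + d\<close>, of "\<lambda>s. ht s t2" "\<lambda>s. Q2 s t2"] Q2 by auto
  have "d * (d * Q1 s1 t1) = d * (d * Q2 s2 t2)"
    using e1 e2 e3 e4 by (simp add: algebra_simps)
  then have "Q1 s1 t1 = Q2 s2 t2" using d by simp
  then show ?thesis using s1 t1 s2 t2 by blast
qed

lemma clairaut2:
  fixes h hs ht Q1 Q2 :: "real \<Rightarrow> real \<Rightarrow> real"
  assumes hs: "\<And>s t. ((\<lambda>s. h s t) has_real_derivative hs s t) (at s)"
    and Q1: "\<And>s t. ((\<lambda>t. hs s t) has_real_derivative Q1 s t) (at t)"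
    and ht: "\<And>s t. ((\<lambda>t. h s t) has_real_derivative ht s t) (at t)"
    and Q2: "\<And>s t. ((\<lambda>s. ht s t) has_real_derivative Q2 s t) (at s)"
    and c1: "continuous_on UNIV (\<lambda>(s,t). Q1 s t)"
    and c2: "continuous_on UNIV (\<lambda>(s,t). Q2 s t)"
  shows "Q1 a b = Q2 a b"
proof (rule ccontr)
  assume ne: "Q1 a b \<noteq> Q2 a b"
  define e where "e = \<bar>Q1 a b - Q2 a b\<bar> / 2"
  have e: "e > 0" using ne by (simp add: e_def)
  obtain d1 where d1: "d1 > 0" "\<And>p. dist p (a,b) < d1 \<Longrightarrow> dist ((\<lambda>(s,t). Q1 s t) p) (Q1 a b) < e"
    using c1 e unfolding continuous_on_iff by (metis UNIV_I case_prod_conv)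
  obtain d2 where d2: "d2 > 0" "\<And>p. dist p (a,b) < d2 \<Longrightarrow> dist ((\<lambda>(s,t). Q2 s t) p) (Q2 a b) < e"
    using c2 e unfolding continuous_on_iff by (metis UNIV_I case_prod_conv)
  define d where "d = min d1 d2 / 2"
  have d: "d > 0" using d1 d2 by (simp add: d_def)
  obtain s1 t1 s2 t2 where st: "a < s1" "s1 < a + d" "b < t1" "t1 < b + d"
     "a < s2" "s2 < a + d" "b < t2" "t2 < b + d" and eq: "Q1 s1 t1 = Q2 s2 t2"
    using mixed_box[OF hs Q1 ht Q2 d] by blast
  have near: "dist (s, t) (a, b) < min d1 d2" if "a < s" "s < a + d" "b < t" "t < b + d" for s t
  proof -
    have "dist (s, t) (a, b) = sqrt ((s - a)\<^sup>2 + (t - b)\<^sup>2)" by (simp add: dist_Pair_Pair dist_real_def)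
    also have "\<dots> \<le> \<bar>s - a\<bar> + \<bar>t - b\<bar>" by (rule sqrt_sum_squares_le_sum_abs)
    also have "\<dots> < min d1 d2"
    proof -
      have "d \<le> d1 / 2" "d \<le> d2 / 2" by (auto simp: d_def)
      then show ?thesis using that by simp
    qed
    finally show ?thesis .
  qed
  have "dist (Q1 s1 t1) (Q1 a b) < e" using d2 d1(2)[of "(s1,t1)"] near[of s1 t1] st by auto
  moreover have "dist (Q2 s2 t2) (Q2 a b) < e" using d2(2)[of "(s2,t2)"] near[of s2 t2] st by auto
  ultimately show False using eq unfolding e_def dist_real_def by (simp add: abs_if split: if_splits)
qed


lemma iter_line_deriv:
  assumes "smooth_real m g" "set js \<subseteq> {0..m}" "j \<le> m"
  shows "((\<lambda>t. iter_pdr js g (y(j:=t))) has_real_derivative iter_pdr (j#js) g y) (at (y j))"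
proof -
  have "(\<lambda>t. iter_pdr js g (y(j:=t))) differentiable (at (y j))"
    using assms unfolding smooth_real_def by auto
  then show ?thesis
    by (simp add: pdr_def DERIV_deriv_iff_real_differentiable)
qed

lemma cont_upd2: "continuous_on UNIV (\<lambda>(s::real, t::real). (x::nat\<Rightarrow>real)(j:=s, k:=t))"
proof (rule continuous_on_coordinatewise_then_product)
  fix i
  show "continuous_on UNIV (\<lambda>p. (case p of (s::real, t::real) \<Rightarrow> x(j:=s, k:=t)) i)"
  proof (cases "i = k")
    case True
    then show ?thesis by (simp add: case_prod_unfold continuous_on_snd[OF continuous_on_id])
  next
    case False
    then show ?thesis
      by (cases "i = j") (simp_all add: case_prod_unfold continuous_on_fst[OF continuous_on_id])
  qed
qed

lemma schwarz:
  assumes sm: "smooth_real m g" and jm: "j \<le> m" and km: "k \<le> m"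
  shows "pdr j (pdr k g) x = pdr k (pdr j g) x"
proof (cases "j = k")
  case True then show ?thesis by simp
next
  case False
  define P where "P s t = x(j:=s, k:=t)" for s t
  have Pj: "(P s t)(j:=s') = P s' t" for s s' t using False by (auto simp: P_def fun_eq_iff)
  have Pk: "(P s t)(k:=t') = P s t'" for s t t' by (auto simp: P_def fun_eq_iff)
  have Pjv: "P s t j = s" for s t using False by (simp add: P_def)
  have Pkv: "P s t k = t" for s t by (simp add: P_def)
  have sj: "set [j] \<subseteq> {0..m}" "set [k] \<subseteq> {0..m}" "set [] \<subseteq> {0..m}" "set [k,j] \<subseteq> {0..m}" "set [j,k] \<subseteq> {0..m}"
    using jm km by auto
  have hs: "((\<lambda>s. g (P s t)) has_real_derivative pdr j g (P s t)) (at s)" for s t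
    using iter_line_deriv[OF sm sj(3) jm, of "P s t"] by (simp add: Pj Pjv)
  have Q1: "((\<lambda>t. pdr j g (P s t)) has_real_derivative pdr k (pdr j g) (P s t)) (at t)" for s t
    using iter_line_deriv[OF sm sj(1) km, of "P s t"] by (simp add: Pk Pkv)
  have ht: "((\<lambda>t. g (P s t)) has_real_derivative pdr k g (P s t)) (at t)" for s t
    using iter_line_deriv[OF sm sj(3) km, of "P s t"] by (simp add: Pk Pkv)
  have Q2: "((\<lambda>s. pdr k g (P s t)) has_real_derivative pdr j (pdr k g) (P s t)) (at s)" for s t
    using iter_line_deriv[OF sm sj(2) jm, of "P s t"] by (simp add: Pj Pjv)
  have cP: "continuous_on UNIV (\<lambda>(s, t). P s t)" unfolding P_def by (rule cont_upd2)
  have c1: "continuous_on UNIV (\<lambda>(s, t). pdr k (pdr j g) (P s t))"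
  proof -
    have "continuous_on UNIV (iter_pdr [k,j] g)" using sm sj(4) unfolding smooth_real_def by blast
    then have "continuous_on UNIV (\<lambda>p. iter_pdr [k,j] g ((\<lambda>(s, t). P s t) p))"
      by (rule continuous_on_compose2[OF _ cP]) auto
    then show ?thesis by (simp add: case_prod_unfold)
  qed
  have c2: "continuous_on UNIV (\<lambda>(s, t). pdr j (pdr k g) (P s t))"
  proof -
    have "continuous_on UNIV (iter_pdr [j,k] g)" using sm sj(5) unfolding smooth_real_def by blast
    then have "continuous_on UNIV (\<lambda>p. iter_pdr [j,k] g ((\<lambda>(s, t). P s t) p))"
      by (rule continuous_on_compose2[OF _ cP]) auto
    then show ?thesis by (simp add: case_prod_unfold)
  qed
  have "pdr k (pdr j g) (P (x j) (x k)) = pdr j (pdr k g) (P (x j) (x k))"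
    by (rule clairaut2[OF hs Q1 ht Q2 c1 c2])
  moreover have "P (x j) (x k) = x" by (simp add: P_def)
  ultimately show ?thesis by simp
qed



instantiation "fun" :: (type, real_vector) real_vector
begin
definition scaleR_fun :: "real \<Rightarrow> ('a \<Rightarrow> 'b) \<Rightarrow> 'a \<Rightarrow> 'b" where
  "scaleR_fun r f = (\<lambda>x. r *\<^sub>R f x)"
instance by standard (simp_all add: scaleR_fun_def fun_eq_iff scaleR_add_right scaleR_add_left)
end

lemma scaleR_fun_apply[simp]: "(r *\<^sub>R f) x = r *\<^sub>R f x"
  by (simp add: scaleR_fun_def)

lemma sum_fun_apply: "(sum g S) x = sum (\<lambda>i. g i x) S"
  by (induction S rule: infinite_finite_induct) auto

lemma cl_add_eq: "cl_add a b = a + b" by (simp add: cl_add_def fun_eq_iff)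
lemma cl_sub_eq: "cl_sub a b = a - b" by (simp add: cl_sub_def fun_eq_iff)
lemma cl_scale_eq: "cl_scale r a = r *\<^sub>R a" by (simp add: cl_scale_def fun_eq_iff)
lemma cl_zero_eq: "cl_zero = 0" by (simp add: cl_zero_def fun_eq_iff)
lemma cl_sum_eq: "cl_sum S g = sum g S" by (simp add: cl_sum_def fun_eq_iff sum_fun_apply)
lemmas cl_eqs = cl_add_eq cl_sub_eq cl_scale_eq cl_zero_eq cl_sum_eq

definition sd :: "nat set \<Rightarrow> nat set \<Rightarrow> nat set" where "sd A B = (A - B) \<union> (B - A)"

lemma sd_eq_iff: "sd A B = C \<longleftrightarrow> B = sd A C"
  unfolding sd_def by blast
lemma sd_comm: "sd A B = sd B A" unfolding sd_def by blast
lemma sd_sub: "A \<subseteq> S \<Longrightarrow> B \<subseteq> S \<Longrightarrow> sd A B \<subseteq> S" unfolding sd_def by blast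
lemma sd_sub_iff: "A \<subseteq> S \<Longrightarrow> sd A B \<subseteq> S \<longleftrightarrow> B \<subseteq> S" unfolding sd_def by blast
lemma sd_sub_iff2: "A \<subseteq> S \<Longrightarrow> sd B A \<subseteq> S \<longleftrightarrow> B \<subseteq> S" unfolding sd_def by blast
lemma sd_mem: "x \<in> sd C {j} \<longleftrightarrow> (x \<in> C) \<noteq> (x = j)" unfolding sd_def by blast
lemma sd_sd: "sd (sd C {j}) {j} = C" unfolding sd_def by blast
lemma sd_swap: "sd (sd C {j}) {k} = sd (sd C {k}) {j}" unfolding sd_def by blast
lemma sd_empty: "sd {} C = C" unfolding sd_def by blast
lemma sd_empty2: "sd C {} = C" unfolding sd_def by blast
lemma sd_fin: "finite C \<Longrightarrow> finite (sd C {j})" unfolding sd_def by simp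

lemma cl_mult_gen:
  "cl_mult m u a C = (if C \<subseteq> {1..m} then
     (\<Sum>A\<in>Pow {1..m}. cl_sign A (sd A C) * u A * a (sd A C)) else 0)"
proof (cases "C \<subseteq> {1..m}")
  case True
  have "cl_mult m u a C = (\<Sum>A\<in>Pow {1..m}. \<Sum>B\<in>Pow {1..m}.
      if B = sd A C then cl_sign A B * u A * a B else 0)"
    unfolding cl_mult_def by (simp add: sd_def[symmetric] sd_eq_iff)
  also have "\<dots> = (\<Sum>A\<in>Pow {1..m}. cl_sign A (sd A C) * u A * a (sd A C))"
  proof (rule sum.cong[OF refl])
    fix A assume "A \<in> Pow {1..m}"
    then have "sd A C \<in> Pow {1..m}" using True sd_sub by blast
    then show "(\<Sum>B\<in>Pow {1..m}. if B = sd A C then cl_sign A B * u A * a B else 0) =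
      cl_sign A (sd A C) * u A * a (sd A C)" by simp
  qed
  finally show ?thesis using True by simp
next
  case False
  have "cl_mult m u a C = 0"
    unfolding cl_mult_def
    by (rule sum.neutral, rule, rule sum.neutral) (use False in \<open>auto simp: sd_def[symmetric] dest: sd_sub\<close>)
  then show ?thesis using False by simp
qed

lemma cl_mult_gen_r:
  "cl_mult m a u C = (if C \<subseteq> {1..m} then
     (\<Sum>B\<in>Pow {1..m}. cl_sign (sd B C) B * a (sd B C) * u B) else 0)"
proof (cases "C \<subseteq> {1..m}")
  case True
  have "cl_mult m a u C = (\<Sum>B\<in>Pow {1..m}. \<Sum>A\<in>Pow {1..m}.
      if A = sd B C then cl_sign A B * a A * u B else 0)"
    unfolding cl_mult_def by (subst sum.swap) (simp add: sd_def[symmetric] sd_comm[of _ B for B] sd_eq_iff)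
  also have "\<dots> = (\<Sum>B\<in>Pow {1..m}. cl_sign (sd B C) B * a (sd B C) * u B)"
  proof (rule sum.cong[OF refl])
    fix B assume "B \<in> Pow {1..m}"
    then have "sd B C \<in> Pow {1..m}" using True sd_sub by blast
    then show "(\<Sum>A\<in>Pow {1..m}. if A = sd B C then cl_sign A B * a A * u B else 0) =
      cl_sign (sd B C) B * a (sd B C) * u B" by simp
  qed
  finally show ?thesis using True by simp
next
  case False
  have "cl_mult m a u C = 0"
    unfolding cl_mult_def
    by (rule sum.neutral, rule, rule sum.neutral) (use False in \<open>auto simp: sd_def[symmetric] dest: sd_sub\<close>)
  then show ?thesis using False by simp
qed

definition Lo :: "nat \<Rightarrow> nat \<Rightarrow> cl \<Rightarrow> cl" where
  "Lo m j a = (\<lambda>C. if C \<subseteq> {1..m} then cl_sign {j} (sd C {j}) * a (sd C {j}) else 0)"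
definition Ro :: "nat \<Rightarrow> nat \<Rightarrow> cl \<Rightarrow> cl" where
  "Ro m j a = (\<lambda>C. if C \<subseteq> {1..m} then cl_sign (sd C {j}) {j} * a (sd C {j}) else 0)"

lemma sum_delta_mult: "finite S \<Longrightarrow> (\<Sum>A\<in>S. (f A::real) * (if A = x then 1 else 0) * g A) = (if x \<in> S then f x * g x else 0)"
proof -
  assume "finite S"
  have "(\<Sum>A\<in>S. f A * (if A = x then 1 else 0) * g A) = (\<Sum>A\<in>S. if A = x then f x * g x else 0)"
    by (rule sum.cong) auto
  then show ?thesis using \<open>finite S\<close> by simp
qed

lemma sum_delta_mult_r: "finite S \<Longrightarrow> (\<Sum>A\<in>S. (f A::real) * g A * (if A = x then 1 else 0)) = (if x \<in> S then f x * g x else 0)"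
proof -
  assume "finite S"
  have "(\<Sum>A\<in>S. f A * g A * (if A = x then 1 else 0)) = (\<Sum>A\<in>S. if A = x then f x * g x else 0)"
    by (rule sum.cong) auto
  then show ?thesis using \<open>finite S\<close> by simp
qed

lemma mult_left_e: "j \<in> {1..m} \<Longrightarrow> cl_mult m (cl_e j) a = Lo m j a"
  unfolding Lo_def
  by (rule ext, subst cl_mult_gen) (simp add: cl_e_def sum_delta_mult sd_comm)

lemma mult_right_e: "j \<in> {1..m} \<Longrightarrow> cl_mult m a (cl_e j) = Ro m j a"
  unfolding Ro_def
  by (rule ext, subst cl_mult_gen_r) (simp add: cl_e_def sum_delta_mult_r sd_comm)

lemma sign_empty: "cl_sign {} B = 1" by (simp add: cl_sign_def)

lemma mult_complex:
  assumes "m \<ge> 1" "cl_in m a"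
  shows "cl_mult m (cl_of_complex w) a = Re w *\<^sub>R a + Im w *\<^sub>R Lo m 1 a"
proof (rule ext)
  fix C
  have u: "cl_of_complex w A = Re w * (if A = {} then 1 else 0) + Im w * (if A = {1} then 1 else 0)" for A
    by (auto simp: cl_of_complex_def)
  have e: "(\<Sum>A\<in>Pow {1..m}. cl_sign A (sd A C) * cl_of_complex w A * a (sd A C)) =
     Re w * (\<Sum>A\<in>Pow {1..m}. cl_sign A (sd A C) * (if A = {} then 1 else 0) * a (sd A C)) +
     Im w * (\<Sum>A\<in>Pow {1..m}. cl_sign A (sd A C) * (if A = {1} then 1 else 0) * a (sd A C))"
    by (simp add: u sum_distrib_left sum.distrib[symmetric] algebra_simps)
  show "cl_mult m (cl_of_complex w) a C = (Re w *\<^sub>R a + Im w *\<^sub>R Lo m 1 a) C"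
    using assms unfolding Lo_def
    by (subst cl_mult_gen, subst e) (auto simp: sum_delta_mult sign_empty sd_comm cl_in_def sd_empty sd_empty2)
qed


lemma sL_eq: "cl_sign {j} B = (-1) ^ card {b\<in>B. b < j} * (if j \<in> B then -1 else 1)"
proof -
  have "{(a, b). a \<in> {j} \<and> b \<in> B \<and> b < a} = Pair j ` {b\<in>B. b < j}" by auto
  then have c: "card {(a, b). a \<in> {j} \<and> b \<in> B \<and> b < a} = card {b\<in>B. b < j}"
    by (simp add: card_image inj_on_def)
  have "card ({j} \<inter> B) = (if j \<in> B then 1 else 0)" by auto
  then show ?thesis unfolding cl_sign_def c by (simp add: power_add)
qed

lemma sR_eq: "cl_sign B {j} = (-1) ^ card {a\<in>B. j < a} * (if j \<in> B then -1 else 1)"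
proof -
  have "{(a, b). a \<in> B \<and> b \<in> {j} \<and> b < a} = (\<lambda>a. (a, j)) ` {a\<in>B. j < a}" by auto
  then have c: "card {(a, b). a \<in> B \<and> b \<in> {j} \<and> b < a} = card {a\<in>B. j < a}"
    by (simp add: card_image inj_on_def)
  have "card (B \<inter> {j}) = (if j \<in> B then 1 else 0)" by auto
  then show ?thesis unfolding cl_sign_def c by (simp add: power_add)
qed

lemma pow_toggle:
  assumes "finite B"
  shows "(-1::real) ^ card {b \<in> sd B {k}. P b} = (if P k then -1 else 1) * (-1) ^ card {b\<in>B. P b}"
proof (cases "k \<in> B")
  case True
  have e: "{b \<in> sd B {k}. P b} = {b\<in>B. P b} - {k}" using True by (auto simp: sd_mem)
  have f: "finite {b\<in>B. P b}" using assms by simp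
  show ?thesis
  proof (cases "P k")
    case True
    then have "k \<in> {b\<in>B. P b}" using \<open>k \<in> B\<close> by simp
    then have "card {b\<in>B. P b} = Suc (card ({b\<in>B. P b} - {k}))"
      using f by (metis card_Suc_Diff1)
    then show ?thesis unfolding e using True by simp
  next
    case False
    then have "{b\<in>B. P b} - {k} = {b\<in>B. P b}" by auto
    then show ?thesis unfolding e using False by simp
  qed
next
  case False
  have e: "{b \<in> sd B {k}. P b} = (if P k then insert k {b\<in>B. P b} else {b\<in>B. P b})"
    using False by (auto simp: sd_mem)
  have f: "finite {b\<in>B. P b}" using assms by simp
  show ?thesis unfolding e using False f by simp
qed

lemma sL_tog: "finite B \<Longrightarrow> cl_sign {j} (sd B {k}) =
   (if k < j then -1 else 1) * (if k = j then -1 else 1) * cl_sign {j} B"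
  unfolding sL_eq by (subst pow_toggle) (auto simp: sd_mem)

lemma sR_tog: "finite B \<Longrightarrow> cl_sign (sd B {k}) {j} =
   (if j < k then -1 else 1) * (if k = j then -1 else 1) * cl_sign B {j}"
  unfolding sR_eq by (subst pow_toggle) (auto simp: sd_mem)

lemma sign_sq: "cl_sign A B * cl_sign A B = 1"
  unfolding cl_sign_def by (simp add: power_mult_distrib[symmetric])

lemma finite_sub: "(C::nat set) \<subseteq> {1..m} \<Longrightarrow> finite C" by (rule finite_subset) auto

lemma sd_single_sub: "j \<in> {1..m} \<Longrightarrow> sd C {j} \<subseteq> {1..m} \<longleftrightarrow> C \<subseteq> {1..m}"
  by (rule sd_sub_iff2) auto

lemma LL: assumes "j \<in> {1..m}" "cl_in m a" shows "Lo m j (Lo m j a) = - a"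
proof (rule ext)
  fix C show "Lo m j (Lo m j a) C = (- a) C"
  proof (cases "C \<subseteq> {1..m}")
    case True
    then have f: "finite C" by (rule finite_sub)
    have sj: "sd C {j} \<subseteq> {1..m}" using True assms(1) sd_single_sub by blast
    have "Lo m j (Lo m j a) C = cl_sign {j} (sd C {j}) * cl_sign {j} C * a C"
      using True sj by (simp add: Lo_def sd_sd)
    also have "\<dots> = - (cl_sign {j} C * cl_sign {j} C) * a C"
      using f by (simp add: sL_tog)
    finally show ?thesis by (simp add: sign_sq)
  next
    case False then show ?thesis using assms by (simp add: Lo_def cl_in_def)
  qed
qed

lemma RR: assumes "j \<in> {1..m}" "cl_in m a" shows "Ro m j (Ro m j a) = - a"
proof (rule ext)
  fix C show "Ro m j (Ro m j a) C = (- a) C"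
  proof (cases "C \<subseteq> {1..m}")
    case True
    then have f: "finite C" by (rule finite_sub)
    have sj: "sd C {j} \<subseteq> {1..m}" using True assms(1) sd_single_sub by blast
    have "Ro m j (Ro m j a) C = cl_sign (sd C {j}) {j} * cl_sign C {j} * a C"
      using True sj by (simp add: Ro_def sd_sd)
    also have "\<dots> = - (cl_sign C {j} * cl_sign C {j}) * a C"
      using f by (simp add: sR_tog)
    finally show ?thesis by (simp add: sign_sq)
  next
    case False then show ?thesis using assms by (simp add: Ro_def cl_in_def)
  qed
qed

lemma LLa: assumes "j \<in> {1..m}" "k \<in> {1..m}" "j \<noteq> k"
  shows "Lo m j (Lo m k a) = - Lo m k (Lo m j a)"
proof (rule ext)
  fix C show "Lo m j (Lo m k a) C = (- Lo m k (Lo m j a)) C"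
  proof (cases "C \<subseteq> {1..m}")
    case True
    then have f: "finite C" by (rule finite_sub)
    have sj: "sd C {j} \<subseteq> {1..m}" using True assms(1) sd_single_sub by blast
    have sk: "sd C {k} \<subseteq> {1..m}" using True assms(2) sd_single_sub by blast
    show ?thesis using True assms f sj sk
      by (simp add: Lo_def sd_fin sL_tog sd_swap[of C j k])
  next
    case False then show ?thesis by (simp add: Lo_def)
  qed
qed

lemma RRa: assumes "j \<in> {1..m}" "k \<in> {1..m}" "j \<noteq> k"
  shows "Ro m j (Ro m k a) = - Ro m k (Ro m j a)"
proof (rule ext)
  fix C show "Ro m j (Ro m k a) C = (- Ro m k (Ro m j a)) C"
  proof (cases "C \<subseteq> {1..m}")
    case True
    then have f: "finite C" by (rule finite_sub)
    have sj: "sd C {j} \<subseteq> {1..m}" using True assms(1) sd_single_sub by blast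
    have sk: "sd C {k} \<subseteq> {1..m}" using True assms(2) sd_single_sub by blast
    show ?thesis using True assms f sj sk
      by (simp add: Ro_def sd_fin sR_tog sd_swap[of C j k])
  next
    case False then show ?thesis by (simp add: Ro_def)
  qed
qed

lemma LR: assumes "j \<in> {1..m}" "k \<in> {1..m}"
  shows "Lo m j (Ro m k a) = Ro m k (Lo m j a)"
proof (rule ext)
  fix C show "Lo m j (Ro m k a) C = Ro m k (Lo m j a) C"
  proof (cases "C \<subseteq> {1..m}")
    case True
    then have f: "finite C" by (rule finite_sub)
    have sj: "sd C {j} \<subseteq> {1..m}" using True assms(1) sd_single_sub by blast
    have sk: "sd C {k} \<subseteq> {1..m}" using True assms(2) sd_single_sub by blast
    show ?thesis using True assms f sj sk
      by (simp add: Lo_def Ro_def sd_fin sR_tog sL_tog sd_swap[of C j k])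
  next
    case False then show ?thesis by (simp add: Lo_def Ro_def)
  qed
qed


lemma Lo_apply: "Lo m k a C = (if C \<subseteq> {1..m} then cl_sign {k} (sd C {k}) * a (sd C {k}) else 0)"
  by (simp add: Lo_def)
lemma Ro_apply: "Ro m k a C = (if C \<subseteq> {1..m} then cl_sign (sd C {k}) {k} * a (sd C {k}) else 0)"
  by (simp add: Ro_def)

lemma Lo_add: "Lo m k (a + b) = Lo m k a + Lo m k b" by (simp add: Lo_def fun_eq_iff algebra_simps)
lemma Lo_scale: "Lo m k (r *\<^sub>R a) = r *\<^sub>R Lo m k a" by (simp add: Lo_def fun_eq_iff algebra_simps)
lemma Lo_neg: "Lo m k (- a) = - Lo m k a" by (simp add: Lo_def fun_eq_iff algebra_simps)
lemma Lo_diff: "Lo m k (a - b) = Lo m k a - Lo m k b" by (simp add: Lo_def fun_eq_iff algebra_simps)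
lemma Lo_zero: "Lo m k 0 = 0" by (simp add: Lo_def fun_eq_iff)
lemma Lo_sum: "Lo m k (sum g S) = (\<Sum>i\<in>S. Lo m k (g i))"
  by (auto simp: fun_eq_iff Lo_def sum_fun_apply sum_distrib_left)
lemma Ro_add: "Ro m k (a + b) = Ro m k a + Ro m k b" by (simp add: Ro_def fun_eq_iff algebra_simps)
lemma Ro_scale: "Ro m k (r *\<^sub>R a) = r *\<^sub>R Ro m k a" by (simp add: Ro_def fun_eq_iff algebra_simps)
lemma Ro_neg: "Ro m k (- a) = - Ro m k a" by (simp add: Ro_def fun_eq_iff algebra_simps)
lemma Ro_diff: "Ro m k (a - b) = Ro m k a - Ro m k b" by (simp add: Ro_def fun_eq_iff algebra_simps)
lemma Ro_zero: "Ro m k 0 = 0" by (simp add: Ro_def fun_eq_iff)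
lemma Ro_sum: "Ro m k (sum g S) = (\<Sum>i\<in>S. Ro m k (g i))"
  by (auto simp: fun_eq_iff Ro_def sum_fun_apply sum_distrib_left)
lemmas LoRo_lin = Lo_add Lo_scale Lo_neg Lo_diff Lo_zero Lo_sum Ro_add Ro_scale Ro_neg Ro_diff Ro_zero Ro_sum

lemma cl_in_Lo: "cl_in m (Lo m k a)" by (simp add: cl_in_def Lo_def)
lemma cl_in_Ro: "cl_in m (Ro m k a)" by (simp add: cl_in_def Ro_def)
lemma cl_in_add: "cl_in m a \<Longrightarrow> cl_in m b \<Longrightarrow> cl_in m (a + b)" by (simp add: cl_in_def)
lemma cl_in_diff: "cl_in m a \<Longrightarrow> cl_in m b \<Longrightarrow> cl_in m (a - b)" by (simp add: cl_in_def)
lemma cl_in_neg: "cl_in m a \<Longrightarrow> cl_in m (- a)" by (simp add: cl_in_def)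
lemma cl_in_scale: "cl_in m a \<Longrightarrow> cl_in m (r *\<^sub>R a)" by (simp add: cl_in_def)
lemma cl_in_zero: "cl_in m 0" by (simp add: cl_in_def)
lemma cl_in_sum: "(\<And>i. i \<in> S \<Longrightarrow> cl_in m (g i)) \<Longrightarrow> cl_in m (sum g S)"
  by (simp add: cl_in_def sum_fun_apply)
lemmas cl_in_intros = cl_in_Lo cl_in_Ro cl_in_add cl_in_diff cl_in_neg cl_in_scale cl_in_zero cl_in_sum

lemma L_inj: assumes "j \<in> {1..m}" "cl_in m a" "Lo m j a = 0" shows "a = 0"
proof -
  have "- a = Lo m j (Lo m j a)" using LL[OF assms(1,2)] by simp
  also have "\<dots> = 0" using assms(3) by (simp add: Lo_zero)
  finally show ?thesis by simp
qed

section \<open>Calculus\<close>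

definition ldiff :: "nat \<Rightarrow> (pt \<Rightarrow> cl) \<Rightarrow> bool" where
  "ldiff m f \<longleftrightarrow> (\<forall>j\<le>m. \<forall>x C. (\<lambda>t. f (x(j:=t)) C) differentiable (at (x j)))"

lemma pd_alt: "pd j f x C = deriv (\<lambda>t. f (x(j:=t)) C) (x j)"
  by (simp add: pd_def pdr_def)

lemma ldiff_deriv: "ldiff m f \<Longrightarrow> j \<le> m \<Longrightarrow>
   ((\<lambda>t. f (x(j:=t)) C) has_real_derivative pd j f x C) (at (x j))"
  unfolding ldiff_def pd_alt by (simp add: DERIV_deriv_iff_real_differentiable)

lemma pd_eqI: "(\<And>C. ((\<lambda>t. f (x(j:=t)) C) has_real_derivative D C) (at (x j))) \<Longrightarrow> pd j f x = D"
  unfolding pd_alt by (rule ext) (rule DERIV_imp_deriv)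

lemma ldiffI: "(\<And>j x C. j \<le> m \<Longrightarrow> ((\<lambda>t. f (x(j:=t)) C) has_real_derivative D j x C) (at (x j))) \<Longrightarrow> ldiff m f"
  unfolding ldiff_def using real_differentiable_def by blast

lemma pd_add: "ldiff m f \<Longrightarrow> ldiff m g \<Longrightarrow> j \<le> m \<Longrightarrow> pd j (\<lambda>x. f x + g x) x = pd j f x + pd j g x"
  by (rule pd_eqI) (simp add: DERIV_add ldiff_deriv)
lemma ldiff_add: "ldiff m f \<Longrightarrow> ldiff m g \<Longrightarrow> ldiff m (\<lambda>x. f x + g x)"
  unfolding ldiff_def by simp
lemma pd_diff: "ldiff m f \<Longrightarrow> ldiff m g \<Longrightarrow> j \<le> m \<Longrightarrow> pd j (\<lambda>x. f x - g x) x = pd j f x - pd j g x"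
  by (rule pd_eqI) (simp add: DERIV_diff ldiff_deriv)
lemma ldiff_diff: "ldiff m f \<Longrightarrow> ldiff m g \<Longrightarrow> ldiff m (\<lambda>x. f x - g x)"
  unfolding ldiff_def by simp
lemma pd_neg: "ldiff m f \<Longrightarrow> j \<le> m \<Longrightarrow> pd j (\<lambda>x. - f x) x = - pd j f x"
  by (rule pd_eqI) (simp add: DERIV_minus ldiff_deriv)
lemma ldiff_neg: "ldiff m f \<Longrightarrow> ldiff m (\<lambda>x. - f x)"
  unfolding ldiff_def by simp
lemma pd_scale: "ldiff m f \<Longrightarrow> j \<le> m \<Longrightarrow> pd j (\<lambda>x. r *\<^sub>R f x) x = r *\<^sub>R pd j f x"
  by (rule pd_eqI) (simp add: DERIV_cmult ldiff_deriv)
lemma ldiff_scale: "ldiff m f \<Longrightarrow> ldiff m (\<lambda>x. r *\<^sub>R f x)"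
  unfolding ldiff_def by simp
lemma ldiff_zero: "ldiff m (\<lambda>x. 0)"
  unfolding ldiff_def by simp

lemma pd_Lo: "ldiff m f \<Longrightarrow> j \<le> m \<Longrightarrow> pd j (\<lambda>x. Lo m k (f x)) x = Lo m k (pd j f x)"
  by (rule pd_eqI) (simp add: Lo_apply DERIV_cmult ldiff_deriv)
lemma ldiff_Lo: assumes "ldiff m f" shows "ldiff m (\<lambda>x. Lo m k (f x))"
  unfolding ldiff_def
proof (intro allI impI)
  fix j x C assume "j \<le> m"
  then show "(\<lambda>t. Lo m k (f (x(j := t))) C) differentiable at (x j)"
    using assms unfolding ldiff_def by (cases "C \<subseteq> {1..m}") (simp_all add: Lo_apply)
qed
lemma pd_Ro: "ldiff m f \<Longrightarrow> j \<le> m \<Longrightarrow> pd j (\<lambda>x. Ro m k (f x)) x = Ro m k (pd j f x)"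
  by (rule pd_eqI) (simp add: Ro_apply DERIV_cmult ldiff_deriv)
lemma ldiff_Ro: assumes "ldiff m f" shows "ldiff m (\<lambda>x. Ro m k (f x))"
  unfolding ldiff_def
proof (intro allI impI)
  fix j x C assume "j \<le> m"
  then show "(\<lambda>t. Ro m k (f (x(j := t))) C) differentiable at (x j)"
    using assms unfolding ldiff_def by (cases "C \<subseteq> {1..m}") (simp_all add: Ro_apply)
qed

lemma ldiff_sum: "finite S \<Longrightarrow> (\<And>i. i \<in> S \<Longrightarrow> ldiff m (f i)) \<Longrightarrow> ldiff m (\<lambda>x. \<Sum>i\<in>S. f i x)"
proof (induction S rule: finite_induct)
  case empty show ?case unfolding sum.empty by (rule ldiff_zero)
next
  case (insert a S) then show ?case unfolding sum.insert[OF insert(1,2)] by (intro ldiff_add) auto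
qed

lemma pd_sum: "finite S \<Longrightarrow> (\<And>i. i \<in> S \<Longrightarrow> ldiff m (f i)) \<Longrightarrow> j \<le> m \<Longrightarrow>
   pd j (\<lambda>x. \<Sum>i\<in>S. f i x) x = (\<Sum>i\<in>S. pd j (f i) x)"
proof (induction S rule: finite_induct)
  case empty show ?case by (rule pd_eqI) simp
next
  case (insert a S)
  have "pd j (\<lambda>x. \<Sum>i\<in>insert a S. f i x) x = pd j (\<lambda>x. f a x + (\<Sum>i\<in>S. f i x)) x"
    by (simp only: sum.insert[OF insert(1,2)])
  also have "\<dots> = pd j (f a) x + pd j (\<lambda>x. \<Sum>i\<in>S. f i x) x"
    using insert by (intro pd_add ldiff_sum) auto
  also have "\<dots> = (\<Sum>i\<in>insert a S. pd j (f i) x)"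
  proof -
    have IH: "pd j (\<lambda>x. \<Sum>i\<in>S. f i x) x = (\<Sum>i\<in>S. pd j (f i) x)" using insert by auto
    show ?thesis by (simp only: sum.insert[OF insert(1,2)] IH)
  qed
  finally show ?case .
qed

lemma smooth_ldiff: assumes "smooth_cl m f" shows "ldiff m f"
  unfolding ldiff_def
proof (intro allI impI)
  fix j x C assume j: "j \<le> m"
  have "smooth_real m (\<lambda>y. f y C)" using assms smooth_cl_def by blast
  then have "\<forall>j\<in>{0..m}. \<forall>x. (\<lambda>t. iter_pdr [] (\<lambda>y. f y C) (x(j:=t))) differentiable (at (x j))"
    unfolding smooth_real_def by (metis empty_subsetI set_empty)
  then show "(\<lambda>t. f (x(j := t)) C) differentiable at (x j)" using j by simp
qed

lemma smooth_ldiff_pd: assumes "smooth_cl m f" "k \<le> m" shows "ldiff m (pd k f)"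
  unfolding ldiff_def
proof (intro allI impI)
  fix j x C assume j: "j \<le> m"
  have "smooth_real m (\<lambda>y. f y C)" using assms smooth_cl_def by blast
  moreover have "set [k] \<subseteq> {0..m}" using assms(2) by simp
  ultimately have "\<forall>j\<in>{0..m}. \<forall>x. (\<lambda>t. iter_pdr [k] (\<lambda>y. f y C) (x(j:=t))) differentiable (at (x j))"
    unfolding smooth_real_def by blast
  then show "(\<lambda>t. pd k f (x(j := t)) C) differentiable at (x j)" using j by (simp add: pd_def)
qed

lemma smooth_schwarz: assumes "smooth_cl m f" "j \<le> m" "k \<le> m"
  shows "pd j (pd k f) x = pd k (pd j f) x"
proof (rule ext)
  fix C
  have "smooth_real m (\<lambda>y. f y C)" using assms(1) by (simp add: smooth_cl_def)
  from schwarz[OF this assms(2,3)] show "pd j (pd k f) x C = pd k (pd j f) x C"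
    by (simp add: pd_def)
qed

abbreviation dep where "dep m f \<equiv> depends_only_on_y m f"

lemma dep_line: "dep m f \<Longrightarrow> j \<notin> {2..m} \<Longrightarrow> f (x(j:=t)) = f x"
  unfolding depends_only_on_y_def by auto

lemma pd_dep0: "dep m f \<Longrightarrow> j \<notin> {2..m} \<Longrightarrow> pd j f x = 0"
  by (rule pd_eqI) (simp add: dep_line)

lemma dep_pd: assumes "dep m f" shows "dep m (pd j f)"
  unfolding depends_only_on_y_def
proof (intro allI impI)
  fix x x' :: pt assume a: "\<forall>j\<in>{2..m}. x j = x' j"
  show "pd j f x = pd j f x'"
  proof (cases "j \<in> {2..m}")
    case True
    have "f (x(j:=t)) = f (x'(j:=t))" for t
      using assms a unfolding depends_only_on_y_def by auto
    then show ?thesis using True a by (simp add: pd_def pdr_def)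
  next
    case False then show ?thesis using assms by (simp add: pd_dep0)
  qed
qed

lemma dep_comp: "dep m f \<Longrightarrow> dep m (\<lambda>x. h (f x))"
  unfolding depends_only_on_y_def by metis
lemma dep_comp2: "dep m f \<Longrightarrow> dep m g \<Longrightarrow> dep m (\<lambda>x. h (f x) (g x))"
  unfolding depends_only_on_y_def by metis

definition Dl :: "nat \<Rightarrow> (pt \<Rightarrow> cl) \<Rightarrow> pt \<Rightarrow> cl" where
  "Dl m f x = (\<Sum>j\<in>{2..m}. Lo m j (pd j f x))"
definition Dr :: "nat \<Rightarrow> (pt \<Rightarrow> cl) \<Rightarrow> pt \<Rightarrow> cl" where
  "Dr m f x = (\<Sum>j\<in>{2..m}. Ro m j (pd j f x))"

lemma dY_left_eq: "dY_left m f x = Dl m f x"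
  unfolding dY_left_def Dl_def cl_sum_eq by (rule sum.cong) (auto simp: mult_left_e)
lemma dY_right_eq: "dY_right m f x = Dr m f x"
  unfolding dY_right_def Dr_def cl_sum_eq by (rule sum.cong) (auto simp: mult_right_e)

lemma split_1m: "(m::nat) \<ge> 1 \<Longrightarrow> {1..m} = insert 1 {2..m}" by auto

lemma sum_split_1m: "(m::nat) \<ge> 1 \<Longrightarrow> (\<Sum>j\<in>{1..m}. g j) = g 1 + (\<Sum>j\<in>{2..m}. g j)"
  by (subst split_1m) auto

lemma dX_left_eq: assumes "m \<ge> 1" shows "dX_left m f x = pd 0 f x + Lo m 1 (pd 1 f x) + Dl m f x"
proof -
  have "(\<Sum>j\<in>{1..m}. cl_mult m (cl_e j) (pd j f x)) = (\<Sum>j\<in>{1..m}. Lo m j (pd j f x))"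
    by (rule sum.cong) (auto simp: mult_left_e)
  then show ?thesis unfolding dX_left_def Dl_def cl_eqs
    by (simp only: sum_split_1m[OF assms] add.assoc)
qed
lemma dX_right_eq: assumes "m \<ge> 1" shows "dX_right m f x = pd 0 f x + Ro m 1 (pd 1 f x) + Dr m f x"
proof -
  have "(\<Sum>j\<in>{1..m}. cl_mult m (pd j f x) (cl_e j)) = (\<Sum>j\<in>{1..m}. Ro m j (pd j f x))"
    by (rule sum.cong) (auto simp: mult_right_e)
  then show ?thesis unfolding dX_right_def Dr_def cl_eqs
    by (simp only: sum_split_1m[OF assms] add.assoc)
qed


section \<open>Trigonometric structure\<close>

definition cc :: "pt \<Rightarrow> real" where "cc x = cos (x 0) * cosh (x 1)"
definition sc :: "pt \<Rightarrow> real" where "sc x = sin (x 0) * cosh (x 1)"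
definition ss :: "pt \<Rightarrow> real" where "ss x = sin (x 0) * sinh (x 1)"
definition cs :: "pt \<Rightarrow> real" where "cs x = cos (x 0) * sinh (x 1)"

lemma cosh_real: "cosh (q::real) = (exp q + exp (- q)) / 2" by (simp add: cosh_def)
lemma sinh_real: "sinh (q::real) = (exp q - exp (- q)) / 2" by (simp add: sinh_def)

lemma trig_expand:
  assumes m: "m \<ge> 1" and c: "cl_in m (A1 x)" "cl_in m (B1 x)" "cl_in m (A2 x)" "cl_in m (B2 x)"
  shows "trig_combo m A1 B1 A2 B2 x = cc x *\<^sub>R (A1 x + A2 x) + sc x *\<^sub>R (B1 x + B2 x)
     + ss x *\<^sub>R Lo m 1 (A2 x - A1 x) + cs x *\<^sub>R Lo m 1 (B1 x - B2 x)"
  unfolding trig_combo_def cl_eqs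
  using c by (intro ext) (simp add: mult_complex[OF m] zc_def zbc_def Re_cos Im_cos Re_sin Im_sin
      cc_def sc_def ss_def cs_def cosh_real sinh_real Lo_diff field_simps)

definition TF :: "nat \<Rightarrow> (pt \<Rightarrow> cl) \<Rightarrow> (pt \<Rightarrow> cl) \<Rightarrow> (pt \<Rightarrow> cl) \<Rightarrow> (pt \<Rightarrow> cl) \<Rightarrow> pt \<Rightarrow> cl" where
  "TF m W1 W2 W3 W4 x = cc x *\<^sub>R W1 x + sc x *\<^sub>R W2 x + ss x *\<^sub>R Lo m 1 (W3 x) + cs x *\<^sub>R Lo m 1 (W4 x)"

lemma pd_line_cong: "(\<And>t. F (x(j:=t)) = G (x(j:=t))) \<Longrightarrow> pd j F x = pd j G x"
  unfolding pd_alt by simp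

lemma pd_TF_0:
  assumes m2: "m \<ge> 2" and d: "dep m W1" "dep m W2" "dep m W3" "dep m W4"
  shows "pd 0 (TF m W1 W2 W3 W4) x = (- sc x) *\<^sub>R W1 x + cc x *\<^sub>R W2 x + cs x *\<^sub>R Lo m 1 (W3 x) - ss x *\<^sub>R Lo m 1 (W4 x)"
proof (rule pd_eqI)
  fix C
  have n: "(0::nat) \<notin> {2..m}" by simp
  have eq: "(\<lambda>t. TF m W1 W2 W3 W4 (x(0:=t)) C) = (\<lambda>t. cos t * cosh (x 1) * W1 x C + sin t * cosh (x 1) * W2 x C
     + sin t * sinh (x 1) * Lo m 1 (W3 x) C + cos t * sinh (x 1) * Lo m 1 (W4 x) C)"
    by (simp add: TF_def cc_def sc_def ss_def cs_def dep_line[OF d(1) n] dep_line[OF d(2) n]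
        dep_line[OF d(3) n] dep_line[OF d(4) n])
  show "((\<lambda>t. TF m W1 W2 W3 W4 (x(0:=t)) C) has_real_derivative
     ((- sc x) *\<^sub>R W1 x + cc x *\<^sub>R W2 x + cs x *\<^sub>R Lo m 1 (W3 x) - ss x *\<^sub>R Lo m 1 (W4 x)) C) (at (x 0))"
    unfolding eq
    by (auto intro!: derivative_eq_intros simp: cc_def sc_def ss_def cs_def algebra_simps)
qed

lemma pd_TF_1:
  assumes m2: "m \<ge> 2" and d: "dep m W1" "dep m W2" "dep m W3" "dep m W4"
  shows "pd 1 (TF m W1 W2 W3 W4) x = cs x *\<^sub>R W1 x + ss x *\<^sub>R W2 x + sc x *\<^sub>R Lo m 1 (W3 x) + cc x *\<^sub>R Lo m 1 (W4 x)"
proof (rule pd_eqI)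
  fix C
  have n: "Suc 0 \<notin> {2..m}" by simp
  have eq: "(\<lambda>t. TF m W1 W2 W3 W4 (x(1:=t)) C) = (\<lambda>t. cos (x 0) * cosh t * W1 x C + sin (x 0) * cosh t * W2 x C
     + sin (x 0) * sinh t * Lo m 1 (W3 x) C + cos (x 0) * sinh t * Lo m 1 (W4 x) C)"
    by (simp add: TF_def cc_def sc_def ss_def cs_def dep_line[OF d(1) n] dep_line[OF d(2) n]
        dep_line[OF d(3) n] dep_line[OF d(4) n])
  show "((\<lambda>t. TF m W1 W2 W3 W4 (x(1:=t)) C) has_real_derivative
     (cs x *\<^sub>R W1 x + ss x *\<^sub>R W2 x + sc x *\<^sub>R Lo m 1 (W3 x) + cc x *\<^sub>R Lo m 1 (W4 x)) C) (at (x 1))"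
    unfolding eq
    by (auto intro!: derivative_eq_intros simp: cc_def sc_def ss_def cs_def algebra_simps)
qed

lemma pd_TF_j:
  assumes j: "j \<in> {2..m}" and l: "ldiff m W1" "ldiff m W2" "ldiff m W3" "ldiff m W4"
  shows "pd j (TF m W1 W2 W3 W4) x = cc x *\<^sub>R pd j W1 x + sc x *\<^sub>R pd j W2 x
     + ss x *\<^sub>R Lo m 1 (pd j W3 x) + cs x *\<^sub>R Lo m 1 (pd j W4 x)"
proof -
  have jm: "j \<le> m" using j by simp
  define G where "G y = cc x *\<^sub>R W1 y + sc x *\<^sub>R W2 y + ss x *\<^sub>R Lo m 1 (W3 y) + cs x *\<^sub>R Lo m 1 (W4 y)" for y
  have "pd j (TF m W1 W2 W3 W4) x = pd j G x"
    by (rule pd_line_cong) (use j in \<open>simp add: TF_def G_def cc_def sc_def ss_def cs_def\<close>)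
  also have "\<dots> = cc x *\<^sub>R pd j W1 x + sc x *\<^sub>R pd j W2 x
     + ss x *\<^sub>R Lo m 1 (pd j W3 x) + cs x *\<^sub>R Lo m 1 (pd j W4 x)"
    unfolding G_def using l jm
    by (simp add: pd_add[where m=m] pd_scale[where m=m] pd_Lo[where m=m] ldiff_add ldiff_scale ldiff_Lo)
  finally show ?thesis .
qed

lemma four_zero:
  fixes a b c d :: "pt \<Rightarrow> cl"
  assumes d: "dep m a" "dep m b" "dep m c" "dep m d"
    and z: "\<And>x. cc x *\<^sub>R a x + sc x *\<^sub>R b x + ss x *\<^sub>R c x + cs x *\<^sub>R d x = 0"
  shows "a x = 0 \<and> b x = 0 \<and> c x = 0 \<and> d x = 0"
proof -
  have same: "f (x(0:=p, Suc 0:=q)) = f x" if "dep m f" for f :: "pt \<Rightarrow> cl" and p q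
    using that unfolding depends_only_on_y_def by auto
  have s1: "sinh (1::real) \<noteq> 0" by simp
  have "a x = 0" using z[of "x(0:=0, 1:=0)"] by (simp add: cc_def sc_def ss_def cs_def same d)
  moreover have "b x = 0" using z[of "x(0:=pi/2, 1:=0)"] by (simp add: cc_def sc_def ss_def cs_def same d)
  moreover have "cosh 1 *\<^sub>R a x + sinh 1 *\<^sub>R d x = 0"
    using z[of "x(0:=0, 1:=1)"] by (simp add: cc_def sc_def ss_def cs_def same d)
  moreover have "cosh 1 *\<^sub>R b x + sinh 1 *\<^sub>R c x = 0"
    using z[of "x(0:=pi/2, 1:=1)"] by (simp add: cc_def sc_def ss_def cs_def same d)
  ultimately show ?thesis using s1 by simp
qed


lemma Dl_TF:
  assumes m2: "m \<ge> 2" and l: "ldiff m W1" "ldiff m W2" "ldiff m W3" "ldiff m W4"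
  shows "Dl m (TF m W1 W2 W3 W4) x = cc x *\<^sub>R Dl m W1 x + sc x *\<^sub>R Dl m W2 x
     - ss x *\<^sub>R Lo m 1 (Dl m W3 x) - cs x *\<^sub>R Lo m 1 (Dl m W4 x)"
proof -
  have e: "Lo m j (pd j (TF m W1 W2 W3 W4) x) = cc x *\<^sub>R Lo m j (pd j W1 x) + sc x *\<^sub>R Lo m j (pd j W2 x)
     - ss x *\<^sub>R Lo m 1 (Lo m j (pd j W3 x)) - cs x *\<^sub>R Lo m 1 (Lo m j (pd j W4 x))" if j: "j \<in> {2..m}" for j
  proof -
    have j1: "j \<in> {1..m}" "(1::nat) \<in> {1..m}" "j \<noteq> 1" using j m2 by auto
    show ?thesis
      by (simp add: pd_TF_j[OF j l] Lo_add Lo_scale LLa[OF j1, unfolded One_nat_def] Lo_neg)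
  qed
  have s: "(\<Sum>j\<in>{2..m}. Lo m j (pd j (TF m W1 W2 W3 W4) x)) = (\<Sum>j\<in>{2..m}. cc x *\<^sub>R Lo m j (pd j W1 x) + sc x *\<^sub>R Lo m j (pd j W2 x)
     - ss x *\<^sub>R Lo m 1 (Lo m j (pd j W3 x)) - cs x *\<^sub>R Lo m 1 (Lo m j (pd j W4 x)))"
    by (rule sum.cong[OF refl e])
  show ?thesis unfolding Dl_def s
    by (simp only: sum.distrib sum_subtractf scaleR_sum_right[symmetric] Lo_sum[symmetric])
qed

lemma Dr_TF:
  assumes m2: "m \<ge> 2" and l: "ldiff m W1" "ldiff m W2" "ldiff m W3" "ldiff m W4"
  shows "Dr m (TF m W1 W2 W3 W4) x = cc x *\<^sub>R Dr m W1 x + sc x *\<^sub>R Dr m W2 x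
     + ss x *\<^sub>R Lo m 1 (Dr m W3 x) + cs x *\<^sub>R Lo m 1 (Dr m W4 x)"
proof -
  have e: "Ro m j (pd j (TF m W1 W2 W3 W4) x) = cc x *\<^sub>R Ro m j (pd j W1 x) + sc x *\<^sub>R Ro m j (pd j W2 x)
     + ss x *\<^sub>R Lo m 1 (Ro m j (pd j W3 x)) + cs x *\<^sub>R Lo m 1 (Ro m j (pd j W4 x))" if j: "j \<in> {2..m}" for j
  proof -
    have j1: "(1::nat) \<in> {1..m}" "j \<in> {1..m}" using j m2 by auto
    show ?thesis
      by (simp add: pd_TF_j[OF j l] Ro_add Ro_scale LR[OF j1, unfolded One_nat_def])
  qed
  have s: "(\<Sum>j\<in>{2..m}. Ro m j (pd j (TF m W1 W2 W3 W4) x)) = (\<Sum>j\<in>{2..m}. cc x *\<^sub>R Ro m j (pd j W1 x) + sc x *\<^sub>R Ro m j (pd j W2 x)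
     + ss x *\<^sub>R Lo m 1 (Ro m j (pd j W3 x)) + cs x *\<^sub>R Lo m 1 (Ro m j (pd j W4 x)))"
    by (rule sum.cong[OF refl e])
  show ?thesis unfolding Dr_def s
    by (simp only: sum.distrib scaleR_sum_right[symmetric] Lo_sum[symmetric])
qed

lemma dXl_TF:
  assumes m2: "m \<ge> 2" and d: "dep m W1" "dep m W2" "dep m W3" "dep m W4"
    and l: "ldiff m W1" "ldiff m W2" "ldiff m W3" "ldiff m W4"
    and c: "cl_in m (W3 x)" "cl_in m (W4 x)"
  shows "dX_left m (TF m W1 W2 W3 W4) x =
     cc x *\<^sub>R (W2 x - W4 x + Dl m W1 x) + sc x *\<^sub>R (- W1 x - W3 x + Dl m W2 x)
     + ss x *\<^sub>R Lo m 1 (W2 x - W4 x - Dl m W3 x) + cs x *\<^sub>R Lo m 1 (W1 x + W3 x - Dl m W4 x)"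
proof -
  have m1: "m \<ge> 1" "(1::nat) \<in> {1..m}" using m2 by auto
  show ?thesis
    unfolding dX_left_eq[OF m1(1)] pd_TF_0[OF m2 d] pd_TF_1[OF m2 d] Dl_TF[OF m2 l]
    by (simp add: Lo_add Lo_scale Lo_diff Lo_neg LL[OF m1(2) c(1), unfolded One_nat_def] LL[OF m1(2) c(2), unfolded One_nat_def] algebra_simps)
qed

lemma dXr_TF:
  assumes m2: "m \<ge> 2" and d: "dep m W1" "dep m W2" "dep m W3" "dep m W4"
    and l: "ldiff m W1" "ldiff m W2" "ldiff m W3" "ldiff m W4"
  shows "dX_right m (TF m W1 W2 W3 W4) x =
     cc x *\<^sub>R (W2 x + Ro m 1 (Lo m 1 (W4 x)) + Dr m W1 x) + sc x *\<^sub>R (- W1 x + Ro m 1 (Lo m 1 (W3 x)) + Dr m W2 x)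
     + ss x *\<^sub>R (- Lo m 1 (W4 x) + Ro m 1 (W2 x) + Lo m 1 (Dr m W3 x))
     + cs x *\<^sub>R (Lo m 1 (W3 x) + Ro m 1 (W1 x) + Lo m 1 (Dr m W4 x))"
proof -
  have m1: "m \<ge> 1" using m2 by auto
  show ?thesis
    unfolding dX_right_eq[OF m1(1)] pd_TF_0[OF m2 d] pd_TF_1[OF m2 d] Dr_TF[OF m2 l]
    by (simp add: Ro_add Ro_scale Ro_diff Ro_neg algebra_simps)
qed


section \<open>Dirac operator identities\<close>

lemma cl_in_pd: "(\<And>x. cl_in m (f x)) \<Longrightarrow> cl_in m (pd j f x)"
  unfolding cl_in_def pd_alt by simp

lemma ldiff_Dl: "(\<And>j. j \<in> {2..m} \<Longrightarrow> ldiff m (pd j f)) \<Longrightarrow> ldiff m (Dl m f)"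
  unfolding Dl_def by (rule ldiff_sum) (auto intro: ldiff_Lo)
lemma ldiff_Dr: "(\<And>j. j \<in> {2..m} \<Longrightarrow> ldiff m (pd j f)) \<Longrightarrow> ldiff m (Dr m f)"
  unfolding Dr_def by (rule ldiff_sum) (auto intro: ldiff_Ro)

lemma dep_Dl: assumes "dep m f" shows "dep m (Dl m f)"
  unfolding depends_only_on_y_def
proof (intro allI impI)
  fix x x' :: pt assume a: "\<forall>j\<in>{2..m}. x j = x' j"
  have "pd j f x = pd j f x'" for j using dep_pd[OF assms, of j] a unfolding depends_only_on_y_def by blast
  then show "Dl m f x = Dl m f x'" by (simp add: Dl_def)
qed
lemma dep_Dr: assumes "dep m f" shows "dep m (Dr m f)"
  unfolding depends_only_on_y_def
proof (intro allI impI)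
  fix x x' :: pt assume a: "\<forall>j\<in>{2..m}. x j = x' j"
  have "pd j f x = pd j f x'" for j using dep_pd[OF assms, of j] a unfolding depends_only_on_y_def by blast
  then show "Dr m f x = Dr m f x'" by (simp add: Dr_def)
qed

lemma cl_in_Dl: "cl_in m (Dl m f x)" unfolding Dl_def by (intro cl_in_sum cl_in_Lo)
lemma cl_in_Dr: "cl_in m (Dr m f x)" unfolding Dr_def by (intro cl_in_sum cl_in_Ro)

lemma Dl_add: "ldiff m f \<Longrightarrow> ldiff m g \<Longrightarrow> Dl m (\<lambda>x. f x + g x) x = Dl m f x + Dl m g x"
  unfolding Dl_def by (simp add: pd_add[where m=m] Lo_add sum.distrib)
lemma Dr_add: "ldiff m f \<Longrightarrow> ldiff m g \<Longrightarrow> Dr m (\<lambda>x. f x + g x) x = Dr m f x + Dr m g x"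
  unfolding Dr_def by (simp add: pd_add[where m=m] Ro_add sum.distrib)
lemma Dl_diff: "ldiff m f \<Longrightarrow> ldiff m g \<Longrightarrow> Dl m (\<lambda>x. f x - g x) x = Dl m f x - Dl m g x"
  unfolding Dl_def by (simp add: pd_diff[where m=m] Lo_diff sum_subtractf)
lemma Dr_diff: "ldiff m f \<Longrightarrow> ldiff m g \<Longrightarrow> Dr m (\<lambda>x. f x - g x) x = Dr m f x - Dr m g x"
  unfolding Dr_def by (simp add: pd_diff[where m=m] Ro_diff sum_subtractf)
lemma Dl_scale: "ldiff m f \<Longrightarrow> Dl m (\<lambda>x. r *\<^sub>R f x) x = r *\<^sub>R Dl m f x"
  unfolding Dl_def by (simp add: pd_scale[where m=m] Lo_scale scaleR_sum_right)
lemma Dr_scale: "ldiff m f \<Longrightarrow> Dr m (\<lambda>x. r *\<^sub>R f x) x = r *\<^sub>R Dr m f x"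
  unfolding Dr_def by (simp add: pd_scale[where m=m] Ro_scale scaleR_sum_right)

lemma Dl_L: assumes "ldiff m f" "m \<ge> 2" shows "Dl m (\<lambda>x. Lo m 1 (f x)) x = - Lo m 1 (Dl m f x)"
proof -
  have "Lo m j (pd j (\<lambda>x. Lo m 1 (f x)) x) = - Lo m 1 (Lo m j (pd j f x))" if "j \<in> {2..m}" for j
  proof -
    have j1: "j \<in> {1..m}" "(1::nat) \<in> {1..m}" "j \<noteq> 1" using that assms by auto
    show ?thesis using that assms by (simp add: pd_Lo LLa[OF j1, unfolded One_nat_def])
  qed
  then show ?thesis unfolding Dl_def by (simp add: Lo_sum sum_negf)
qed

lemma Dl_R: assumes "ldiff m f" "m \<ge> 2" shows "Dl m (\<lambda>x. Ro m 1 (f x)) x = Ro m 1 (Dl m f x)"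
proof -
  have "Lo m j (pd j (\<lambda>x. Ro m 1 (f x)) x) = Ro m 1 (Lo m j (pd j f x))" if "j \<in> {2..m}" for j
  proof -
    have j1: "j \<in> {1..m}" "(1::nat) \<in> {1..m}" using that assms by auto
    show ?thesis using that assms by (simp add: pd_Ro LR[OF j1, unfolded One_nat_def])
  qed
  then show ?thesis unfolding Dl_def by (simp add: Ro_sum)
qed

lemma Dr_L: assumes "ldiff m f" "m \<ge> 2" shows "Dr m (\<lambda>x. Lo m 1 (f x)) x = Lo m 1 (Dr m f x)"
proof -
  have "Ro m j (pd j (\<lambda>x. Lo m 1 (f x)) x) = Lo m 1 (Ro m j (pd j f x))" if "j \<in> {2..m}" for j
  proof -
    have j1: "(1::nat) \<in> {1..m}" "j \<in> {1..m}" using that assms by auto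
    show ?thesis using that assms by (simp add: pd_Lo LR[OF j1, unfolded One_nat_def])
  qed
  then show ?thesis unfolding Dr_def by (simp add: Lo_sum)
qed

lemma Dr_R: assumes "ldiff m f" "m \<ge> 2" shows "Dr m (\<lambda>x. Ro m 1 (f x)) x = - Ro m 1 (Dr m f x)"
proof -
  have "Ro m j (pd j (\<lambda>x. Ro m 1 (f x)) x) = - Ro m 1 (Ro m j (pd j f x))" if "j \<in> {2..m}" for j
  proof -
    have j1: "j \<in> {1..m}" "(1::nat) \<in> {1..m}" "j \<noteq> 1" using that assms by auto
    show ?thesis using that assms by (simp add: pd_Ro RRa[OF j1, unfolded One_nat_def])
  qed
  then show ?thesis unfolding Dr_def by (simp add: Ro_sum sum_negf)
qed

lemma antisym_double_sum:
  fixes X :: "nat \<Rightarrow> nat \<Rightarrow> 'a::real_vector"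
  assumes "finite S" and a: "\<And>j k. j \<in> S \<Longrightarrow> k \<in> S \<Longrightarrow> j \<noteq> k \<Longrightarrow> X j k = - X k j"
  shows "(\<Sum>j\<in>S. \<Sum>k\<in>S. X j k) = (\<Sum>j\<in>S. X j j)"
proof -
  let ?T = "(\<Sum>j\<in>S. \<Sum>k\<in>S. X j k)"
  have sw: "?T = (\<Sum>j\<in>S. \<Sum>k\<in>S. X k j)" by (rule sum.swap)
  have "?T + ?T = (\<Sum>j\<in>S. \<Sum>k\<in>S. X j k + X k j)"
    by (subst sw) (simp add: sum.distrib)
  also have "\<dots> = (\<Sum>j\<in>S. \<Sum>k\<in>S. if k = j then X j j + X j j else 0)"
  proof (intro sum.cong refl)
    fix j k assume jk: "j \<in> S" "k \<in> S"
    show "X j k + X k j = (if k = j then X j j + X j j else 0)"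
    proof (cases "k = j")
      case False
      then have "X j k = - X k j" using a[OF jk] by auto
      then show ?thesis using False by simp
    qed simp
  qed
  also have "\<dots> = (\<Sum>j\<in>S. X j j + X j j)"
    using assms(1) by (intro sum.cong refl) (simp add: sum.delta)
  also have "\<dots> = (\<Sum>j\<in>S. X j j) + (\<Sum>j\<in>S. X j j)"
    by (simp only: sum.distrib)
  finally have "2 *\<^sub>R ?T = 2 *\<^sub>R (\<Sum>j\<in>S. X j j)" by (simp add: scaleR_2)
  then show ?thesis by simp
qed

definition lapl :: "nat \<Rightarrow> (pt \<Rightarrow> cl) \<Rightarrow> pt \<Rightarrow> cl" where
  "lapl m f x = (\<Sum>j\<in>{2..m}. pd j (pd j f) x)"

lemma lap_y_eq: "lap_y m f x = lapl m f x" by (simp add: lap_y_def lapl_def cl_sum_eq)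

lemma smooth_cl_in: "smooth_cl m f \<Longrightarrow> cl_in m (f x)" by (simp add: smooth_cl_def)

lemma pd_Dl: assumes sm: "smooth_cl m V" and j: "j \<le> m"
  shows "pd j (Dl m V) x = (\<Sum>k\<in>{2..m}. Lo m k (pd j (pd k V) x))"
proof -
  have e: "Dl m V = (\<lambda>y. \<Sum>k\<in>{2..m}. Lo m k (pd k V y))" by (rule ext) (simp add: Dl_def)
  have l: "ldiff m (\<lambda>y. Lo m k (pd k V y))" if "k \<in> {2..m}" for k
    using that by (intro ldiff_Lo smooth_ldiff_pd[OF sm]) auto
  have "pd j (Dl m V) x = (\<Sum>k\<in>{2..m}. pd j (\<lambda>y. Lo m k (pd k V y)) x)"
    unfolding e by (rule pd_sum[OF _ l j]) auto
  also have "\<dots> = (\<Sum>k\<in>{2..m}. Lo m k (pd j (pd k V) x))"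
    by (rule sum.cong[OF refl]) (rule pd_Lo[OF smooth_ldiff_pd[OF sm] j], auto)
  finally show ?thesis .
qed

lemma pd_Dr: assumes sm: "smooth_cl m V" and j: "j \<le> m"
  shows "pd j (Dr m V) x = (\<Sum>k\<in>{2..m}. Ro m k (pd j (pd k V) x))"
proof -
  have e: "Dr m V = (\<lambda>y. \<Sum>k\<in>{2..m}. Ro m k (pd k V y))" by (rule ext) (simp add: Dr_def)
  have l: "ldiff m (\<lambda>y. Ro m k (pd k V y))" if "k \<in> {2..m}" for k
    using that by (intro ldiff_Ro smooth_ldiff_pd[OF sm]) auto
  have "pd j (Dr m V) x = (\<Sum>k\<in>{2..m}. pd j (\<lambda>y. Ro m k (pd k V y)) x)"
    unfolding e by (rule pd_sum[OF _ l j]) auto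
  also have "\<dots> = (\<Sum>k\<in>{2..m}. Ro m k (pd j (pd k V) x))"
    by (rule sum.cong[OF refl]) (rule pd_Ro[OF smooth_ldiff_pd[OF sm] j], auto)
  finally show ?thesis .
qed

lemma DlDl: assumes sm: "smooth_cl m V" shows "Dl m (Dl m V) x = - lapl m V x"
proof -
  have l: "ldiff m (\<lambda>y. Lo m k (pd k V y))" if "k \<in> {2..m}" for k
    using that by (intro ldiff_Lo smooth_ldiff_pd[OF sm]) auto
  have "Dl m (Dl m V) x = (\<Sum>j\<in>{2..m}. \<Sum>k\<in>{2..m}. Lo m j (Lo m k (pd j (pd k V) x)))"
    unfolding Dl_def[of m "Dl m V"] by (intro sum.cong refl) (simp add: pd_Dl[OF sm] Lo_sum)
  also have "\<dots> = (\<Sum>j\<in>{2..m}. Lo m j (Lo m j (pd j (pd j V) x)))"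
  proof (rule antisym_double_sum)
    fix j k assume jk: "j \<in> {2..m}" "k \<in> {2..m}" "j \<noteq> k"
    then have j1: "j \<in> {1..m}" "k \<in> {1..m}" by auto
    show "Lo m j (Lo m k (pd j (pd k V) x)) = - Lo m k (Lo m j (pd k (pd j V) x))"
      using LLa[OF j1 jk(3)] smooth_schwarz[OF sm, of j k x] jk by simp
  qed simp
  also have "\<dots> = (\<Sum>j\<in>{2..m}. - pd j (pd j V) x)"
  proof (rule sum.cong[OF refl])
    fix j assume "j \<in> {2..m}"
    then have j1: "j \<in> {1..m}" by auto
    have "cl_in m (pd j (pd j V) x)" by (intro cl_in_pd smooth_cl_in[OF sm])
    then show "Lo m j (Lo m j (pd j (pd j V) x)) = - pd j (pd j V) x" by (rule LL[OF j1])
  qed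
  finally show ?thesis by (simp add: lapl_def sum_negf)
qed

lemma DrDr: assumes sm: "smooth_cl m V" shows "Dr m (Dr m V) x = - lapl m V x"
proof -
  have l: "ldiff m (\<lambda>y. Ro m k (pd k V y))" if "k \<in> {2..m}" for k
    using that by (intro ldiff_Ro smooth_ldiff_pd[OF sm]) auto
  have "Dr m (Dr m V) x = (\<Sum>j\<in>{2..m}. \<Sum>k\<in>{2..m}. Ro m j (Ro m k (pd j (pd k V) x)))"
    unfolding Dr_def[of m "Dr m V"] by (intro sum.cong refl) (simp add: pd_Dr[OF sm] Ro_sum)
  also have "\<dots> = (\<Sum>j\<in>{2..m}. Ro m j (Ro m j (pd j (pd j V) x)))"
  proof (rule antisym_double_sum)
    fix j k assume jk: "j \<in> {2..m}" "k \<in> {2..m}" "j \<noteq> k"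
    then have j1: "j \<in> {1..m}" "k \<in> {1..m}" by auto
    show "Ro m j (Ro m k (pd j (pd k V) x)) = - Ro m k (Ro m j (pd k (pd j V) x))"
      using RRa[OF j1 jk(3)] smooth_schwarz[OF sm, of j k x] jk by simp
  qed simp
  also have "\<dots> = (\<Sum>j\<in>{2..m}. - pd j (pd j V) x)"
  proof (rule sum.cong[OF refl])
    fix j assume "j \<in> {2..m}"
    then have j1: "j \<in> {1..m}" by auto
    have "cl_in m (pd j (pd j V) x)" by (intro cl_in_pd smooth_cl_in[OF sm])
    then show "Ro m j (Ro m j (pd j (pd j V) x)) = - pd j (pd j V) x" by (rule RR[OF j1])
  qed
  finally show ?thesis by (simp add: lapl_def sum_negf)
qed

lemma DlDr: assumes sm: "smooth_cl m V" shows "Dl m (Dr m V) x = Dr m (Dl m V) x"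
proof -
  have l1: "ldiff m (\<lambda>y. Ro m k (pd k V y))" if "k \<in> {2..m}" for k
    using that by (intro ldiff_Ro smooth_ldiff_pd[OF sm]) auto
  have l2: "ldiff m (\<lambda>y. Lo m k (pd k V y))" if "k \<in> {2..m}" for k
    using that by (intro ldiff_Lo smooth_ldiff_pd[OF sm]) auto
  have "Dl m (Dr m V) x = (\<Sum>j\<in>{2..m}. \<Sum>k\<in>{2..m}. Lo m j (Ro m k (pd j (pd k V) x)))"
    unfolding Dl_def[of m "Dr m V"] by (intro sum.cong refl) (simp add: pd_Dr[OF sm] Lo_sum)
  also have "\<dots> = (\<Sum>k\<in>{2..m}. \<Sum>j\<in>{2..m}. Ro m k (Lo m j (pd k (pd j V) x)))"
  proof (subst sum.swap, intro sum.cong refl)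
    fix k j assume "k \<in> {2..m}" "j \<in> {2..m}"
    then have j1: "j \<in> {1..m}" "k \<in> {1..m}" and jm: "j \<le> m" "k \<le> m" by auto
    show "Lo m j (Ro m k (pd j (pd k V) x)) = Ro m k (Lo m j (pd k (pd j V) x))"
      using LR[OF j1, of "pd j (pd k V) x"] smooth_schwarz[OF sm jm, of x] by simp
  qed
  also have "\<dots> = Dr m (Dl m V) x"
    unfolding Dr_def[of m "Dl m V"] by (intro sum.cong refl) (simp add: pd_Dl[OF sm] Ro_sum)
  finally show ?thesis .
qed


lemma Dl_neg: "ldiff m f \<Longrightarrow> Dl m (\<lambda>x. - f x) x = - Dl m f x"
  unfolding Dl_def by (simp add: pd_neg[where m=m] Lo_neg sum_negf)
lemma Dr_neg: "ldiff m f \<Longrightarrow> Dr m (\<lambda>x. - f x) x = - Dr m f x"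
  unfolding Dr_def by (simp add: pd_neg[where m=m] Ro_neg sum_negf)

lemma depI: "(\<And>x x'. (\<forall>j\<in>{2..m}. x j = x' j) \<Longrightarrow> f x = f x') \<Longrightarrow> dep m f"
  unfolding depends_only_on_y_def by blast
lemma depD: "dep m f \<Longrightarrow> (\<forall>j\<in>{2..m}. x j = x' j) \<Longrightarrow> f x = f x'"
  unfolding depends_only_on_y_def by blast

lemma part1:
  fixes A1 B1 A2 B2 :: "pt \<Rightarrow> cl"
  assumes m2: "m \<ge> 2"
    and sm: "smooth_cl m A1" "smooth_cl m B1" "smooth_cl m A2" "smooth_cl m B2"
    and dp: "dep m A1" "dep m B1" "dep m A2" "dep m B2"
  shows "two_sided_monogenic m (trig_combo m A1 B1 A2 B2) \<longleftrightarrow>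
     (\<forall>x. lapl m A1 x = 0) \<and> (\<forall>x. lapl m B1 x = 0) \<and>
     (\<forall>x. Dr m A1 x + B1 x + Ro m 1 (Lo m 1 (B1 x)) = 0) \<and>
     (\<forall>x. Dr m B1 x - A1 x - Ro m 1 (Lo m 1 (A1 x)) = 0) \<and>
     (\<forall>x. A2 x = (1/2) *\<^sub>R Dl m B1 x) \<and> (\<forall>x. B2 x = (-1/2) *\<^sub>R Dl m A1 x)"
proof -
  have m1: "m \<ge> 1" "(1::nat) \<in> {1..m}" using m2 by auto
  have c: "cl_in m (A1 x)" "cl_in m (B1 x)" "cl_in m (A2 x)" "cl_in m (B2 x)" for x
    using sm by (auto intro: smooth_cl_in)
  have l: "ldiff m A1" "ldiff m B1" "ldiff m A2" "ldiff m B2" using sm by (auto intro: smooth_ldiff)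
  have lD: "ldiff m (Dl m A1)" "ldiff m (Dl m B1)" "ldiff m (Dl m A2)" "ldiff m (Dl m B2)"
     "ldiff m (Dr m A1)" "ldiff m (Dr m B1)" "ldiff m (Dr m A2)" "ldiff m (Dr m B2)"
    using sm by (auto intro!: ldiff_Dl ldiff_Dr smooth_ldiff_pd)
  have S: "A1 x = A1 x'" "B1 x = B1 x'" "A2 x = A2 x'" "B2 x = B2 x'"
    "Dl m A1 x = Dl m A1 x'" "Dl m B1 x = Dl m B1 x'" "Dl m A2 x = Dl m A2 x'" "Dl m B2 x = Dl m B2 x'"
    "Dr m A1 x = Dr m A1 x'" "Dr m B1 x = Dr m B1 x'" "Dr m A2 x = Dr m A2 x'" "Dr m B2 x = Dr m B2 x'"
    if a: "\<forall>j\<in>{2..m}. x j = x' j" for x x'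
    using depD[OF dp(1) a] depD[OF dp(2) a] depD[OF dp(3) a] depD[OF dp(4) a]
      depD[OF dep_Dl[OF dp(1)] a] depD[OF dep_Dl[OF dp(2)] a] depD[OF dep_Dl[OF dp(3)] a] depD[OF dep_Dl[OF dp(4)] a]
      depD[OF dep_Dr[OF dp(1)] a] depD[OF dep_Dr[OF dp(2)] a] depD[OF dep_Dr[OF dp(3)] a] depD[OF dep_Dr[OF dp(4)] a]
    by auto
  define W1 where "W1 = (\<lambda>x. A1 x + A2 x)"
  define W2 where "W2 = (\<lambda>x. B1 x + B2 x)"
  define W3 where "W3 = (\<lambda>x. A2 x - A1 x)"
  define W4 where "W4 = (\<lambda>x. B1 x - B2 x)"
  have TFeq: "trig_combo m A1 B1 A2 B2 = TF m W1 W2 W3 W4"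
    by (rule ext) (simp add: trig_expand[OF m1(1) c] TF_def W1_def W2_def W3_def W4_def)
  have lW: "ldiff m W1" "ldiff m W2" "ldiff m W3" "ldiff m W4"
    unfolding W1_def W2_def W3_def W4_def using l by (auto intro: ldiff_add ldiff_diff)
  have dW: "dep m W1" "dep m W2" "dep m W3" "dep m W4"
    unfolding W1_def W2_def W3_def W4_def using dp by (auto intro: dep_comp2)
  have cW: "cl_in m (W3 x)" "cl_in m (W4 x)" for x
    unfolding W3_def W4_def using c by (auto intro: cl_in_diff)
  have DlW: "Dl m W1 x = Dl m A1 x + Dl m A2 x" "Dl m W2 x = Dl m B1 x + Dl m B2 x"
     "Dl m W3 x = Dl m A2 x - Dl m A1 x" "Dl m W4 x = Dl m B1 x - Dl m B2 x" for x
    unfolding W1_def W2_def W3_def W4_def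
    by (rule Dl_add[OF l(1) l(3)], rule Dl_add[OF l(2) l(4)], rule Dl_diff[OF l(3) l(1)], rule Dl_diff[OF l(2) l(4)])
  have DrW: "Dr m W1 x = Dr m A1 x + Dr m A2 x" "Dr m W2 x = Dr m B1 x + Dr m B2 x"
     "Dr m W3 x = Dr m A2 x - Dr m A1 x" "Dr m W4 x = Dr m B1 x - Dr m B2 x" for x
    unfolding W1_def W2_def W3_def W4_def
    by (rule Dr_add[OF l(1) l(3)], rule Dr_add[OF l(2) l(4)], rule Dr_diff[OF l(3) l(1)], rule Dr_diff[OF l(2) l(4)])

  define E1 where "E1 = (\<lambda>x. 2 *\<^sub>R B2 x + Dl m A1 x + Dl m A2 x)"
  define E2 where "E2 = (\<lambda>x. Dl m B1 x + Dl m B2 x - 2 *\<^sub>R A2 x)"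
  define E3 where "E3 = (\<lambda>x. 2 *\<^sub>R B2 x + Dl m A1 x - Dl m A2 x)"
  define E4 where "E4 = (\<lambda>x. 2 *\<^sub>R A2 x - Dl m B1 x + Dl m B2 x)"
  have dXl: "dX_left m (trig_combo m A1 B1 A2 B2) x =
     cc x *\<^sub>R E1 x + sc x *\<^sub>R E2 x + ss x *\<^sub>R Lo m 1 (E3 x) + cs x *\<^sub>R Lo m 1 (E4 x)" for x
  proof -
    have "W2 x - W4 x + Dl m W1 x = E1 x" "- W1 x - W3 x + Dl m W2 x = E2 x"
      "W2 x - W4 x - Dl m W3 x = E3 x" "W1 x + W3 x - Dl m W4 x = E4 x"
      unfolding DlW by (simp_all add: W1_def W2_def W3_def W4_def E1_def E2_def E3_def E4_def algebra_simps scaleR_2)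
    then show ?thesis unfolding TFeq dXl_TF[OF m2 dW lW cW] by simp
  qed
  have dE: "dep m E1" "dep m E2" "dep m (\<lambda>x. Lo m 1 (E3 x))" "dep m (\<lambda>x. Lo m 1 (E4 x))"
  proof -
    show "dep m E1" proof (rule depI)
      fix x x' :: pt assume a: "\<forall>j\<in>{2..m}. x j = x' j"
      show "E1 x = E1 x'" using S[OF a] by (simp add: E1_def E2_def E3_def E4_def)
    qed
    show "dep m E2" proof (rule depI)
      fix x x' :: pt assume a: "\<forall>j\<in>{2..m}. x j = x' j"
      show "E2 x = E2 x'" using S[OF a] by (simp add: E1_def E2_def E3_def E4_def)
    qed
    show "dep m (\<lambda>x. Lo m 1 (E3 x))" proof (rule depI)
      fix x x' :: pt assume a: "\<forall>j\<in>{2..m}. x j = x' j"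
      show "(\<lambda>x. Lo m 1 (E3 x)) x = (\<lambda>x. Lo m 1 (E3 x)) x'" using S[OF a] by (simp add: E1_def E2_def E3_def E4_def)
    qed
    show "dep m (\<lambda>x. Lo m 1 (E4 x))" proof (rule depI)
      fix x x' :: pt assume a: "\<forall>j\<in>{2..m}. x j = x' j"
      show "(\<lambda>x. Lo m 1 (E4 x)) x = (\<lambda>x. Lo m 1 (E4 x)) x'" using S[OF a] by (simp add: E1_def E2_def E3_def E4_def)
    qed
  qed
  have cE: "cl_in m (E3 x)" "cl_in m (E4 x)" for x
    unfolding E3_def E4_def using c by (auto intro!: cl_in_intros cl_in_Dl)
  have left_iff: "left_monogenic m (trig_combo m A1 B1 A2 B2) \<longleftrightarrow>
     (\<forall>x. E1 x = 0 \<and> E2 x = 0 \<and> E3 x = 0 \<and> E4 x = 0)"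
  proof
    assume "left_monogenic m (trig_combo m A1 B1 A2 B2)"
    then have z: "cc x *\<^sub>R E1 x + sc x *\<^sub>R E2 x + ss x *\<^sub>R Lo m 1 (E3 x) + cs x *\<^sub>R Lo m 1 (E4 x) = 0" for x
      using dXl by (simp add: left_monogenic_def cl_zero_eq)
    show "\<forall>x. E1 x = 0 \<and> E2 x = 0 \<and> E3 x = 0 \<and> E4 x = 0"
    proof
      fix x
      from four_zero[OF dE z] have "E1 x = 0" "E2 x = 0" "Lo m 1 (E3 x) = 0" "Lo m 1 (E4 x) = 0" by auto
      then show "E1 x = 0 \<and> E2 x = 0 \<and> E3 x = 0 \<and> E4 x = 0"
        using L_inj[OF m1(2) cE(1)] L_inj[OF m1(2) cE(2)] by auto
    qed
  next
    assume "\<forall>x. E1 x = 0 \<and> E2 x = 0 \<and> E3 x = 0 \<and> E4 x = 0"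
    then show "left_monogenic m (trig_combo m A1 B1 A2 B2)"
      by (simp add: left_monogenic_def cl_zero_eq dXl Lo_zero)
  qed
  define F1 where "F1 = (\<lambda>x. B1 x + B2 x + Ro m 1 (Lo m 1 (B1 x)) - Ro m 1 (Lo m 1 (B2 x)) + Dr m A1 x + Dr m A2 x)"
  define F2 where "F2 = (\<lambda>x. - A1 x - A2 x + Ro m 1 (Lo m 1 (A2 x)) - Ro m 1 (Lo m 1 (A1 x)) + Dr m B1 x + Dr m B2 x)"
  define F3 where "F3 = (\<lambda>x. - Lo m 1 (B1 x) + Lo m 1 (B2 x) + Ro m 1 (B1 x) + Ro m 1 (B2 x) + Lo m 1 (Dr m A2 x) - Lo m 1 (Dr m A1 x))"
  define F4 where "F4 = (\<lambda>x. Lo m 1 (A2 x) - Lo m 1 (A1 x) + Ro m 1 (A1 x) + Ro m 1 (A2 x) + Lo m 1 (Dr m B1 x) - Lo m 1 (Dr m B2 x))"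
  have dXr: "dX_right m (trig_combo m A1 B1 A2 B2) x =
     cc x *\<^sub>R F1 x + sc x *\<^sub>R F2 x + ss x *\<^sub>R F3 x + cs x *\<^sub>R F4 x" for x
  proof -
    have "W2 x + Ro m 1 (Lo m 1 (W4 x)) + Dr m W1 x = F1 x"
      "- W1 x + Ro m 1 (Lo m 1 (W3 x)) + Dr m W2 x = F2 x"
      "- Lo m 1 (W4 x) + Ro m 1 (W2 x) + Lo m 1 (Dr m W3 x) = F3 x"
      "Lo m 1 (W3 x) + Ro m 1 (W1 x) + Lo m 1 (Dr m W4 x) = F4 x"
      unfolding DrW by (simp_all add: W1_def W2_def W3_def W4_def F1_def F2_def F3_def F4_def
          Lo_add Lo_diff Ro_add Ro_diff algebra_simps)
    then show ?thesis unfolding TFeq dXr_TF[OF m2 dW lW] by simp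
  qed
  have dF: "dep m F1" "dep m F2" "dep m F3" "dep m F4"
  proof -
    show "dep m F1" proof (rule depI)
      fix x x' :: pt assume a: "\<forall>j\<in>{2..m}. x j = x' j"
      show "F1 x = F1 x'" using S[OF a] by (simp add: F1_def F2_def F3_def F4_def)
    qed
    show "dep m F2" proof (rule depI)
      fix x x' :: pt assume a: "\<forall>j\<in>{2..m}. x j = x' j"
      show "F2 x = F2 x'" using S[OF a] by (simp add: F1_def F2_def F3_def F4_def)
    qed
    show "dep m F3" proof (rule depI)
      fix x x' :: pt assume a: "\<forall>j\<in>{2..m}. x j = x' j"
      show "F3 x = F3 x'" using S[OF a] by (simp add: F1_def F2_def F3_def F4_def)
    qed
    show "dep m F4" proof (rule depI)
      fix x x' :: pt assume a: "\<forall>j\<in>{2..m}. x j = x' j"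
      show "F4 x = F4 x'" using S[OF a] by (simp add: F1_def F2_def F3_def F4_def)
    qed
  qed
  have right_iff: "right_monogenic m (trig_combo m A1 B1 A2 B2) \<longleftrightarrow>
     (\<forall>x. F1 x = 0 \<and> F2 x = 0 \<and> F3 x = 0 \<and> F4 x = 0)"
  proof
    assume "right_monogenic m (trig_combo m A1 B1 A2 B2)"
    then have z: "cc x *\<^sub>R F1 x + sc x *\<^sub>R F2 x + ss x *\<^sub>R F3 x + cs x *\<^sub>R F4 x = 0" for x
      using dXr by (simp add: right_monogenic_def cl_zero_eq)
    show "\<forall>x. F1 x = 0 \<and> F2 x = 0 \<and> F3 x = 0 \<and> F4 x = 0"
      using four_zero[OF dF z] by blast
  next
    assume "\<forall>x. F1 x = 0 \<and> F2 x = 0 \<and> F3 x = 0 \<and> F4 x = 0"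
    then show "right_monogenic m (trig_combo m A1 B1 A2 B2)"
      by (simp add: right_monogenic_def cl_zero_eq dXr)
  qed
  have cin: "cl_in m (A1 x)" "cl_in m (B1 x)" "cl_in m (A2 x)" "cl_in m (B2 x)"
    "cl_in m (Dl m f x)" "cl_in m (Dr m f x)" "cl_in m (Lo m k v)" "cl_in m (Ro m k v)" for x f k v
    using c by (simp_all add: cl_in_Dl cl_in_Dr cl_in_Lo cl_in_Ro)
  note LL1 = LL[OF m1(2)] LL[OF m1(2), unfolded One_nat_def]
  note LR1 = LR[OF m1(2) m1(2)] LR[OF m1(2) m1(2), unfolded One_nat_def]
  note opn = Lo_add Lo_diff Lo_neg Lo_scale Ro_add Ro_diff Ro_neg Ro_scale
  show ?thesis
    unfolding two_sided_monogenic_def left_iff right_iff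
  proof (intro iffI)
    assume H: "(\<forall>x. E1 x = 0 \<and> E2 x = 0 \<and> E3 x = 0 \<and> E4 x = 0) \<and>
      (\<forall>x. F1 x = 0 \<and> F2 x = 0 \<and> F3 x = 0 \<and> F4 x = 0)"
    then have e: "E1 x = 0" "E2 x = 0" "E3 x = 0" "E4 x = 0"
      "F1 x = 0" "F2 x = 0" "F3 x = 0" "F4 x = 0" for x by auto
    have hA2: "A2 x = (1/2) *\<^sub>R Dl m B1 x" for x
    proof -
      have "A2 x - (1/2) *\<^sub>R Dl m B1 x = (-1/4) *\<^sub>R (E2 x - E4 x)"
        by (simp add: fun_eq_iff E2_def E4_def algebra_simps)
      then show ?thesis using e by simp
    qed
    have hB2: "B2 x = (-1/2) *\<^sub>R Dl m A1 x" for x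
    proof -
      have "B2 x - (-1/2) *\<^sub>R Dl m A1 x = (1/4) *\<^sub>R (E1 x + E3 x)"
        by (simp add: fun_eq_iff E1_def E3_def algebra_simps)
      then show ?thesis using e by (simp add: eq_neg_iff_add_eq_0)
    qed
    have hDA2: "Dl m A2 x = 0" for x
    proof -
      have "Dl m A2 x = (1/2) *\<^sub>R (E1 x - E3 x)"
        by (simp add: fun_eq_iff E1_def E3_def algebra_simps)
      then show ?thesis using e by simp
    qed
    have hDB2: "Dl m B2 x = 0" for x
    proof -
      have "Dl m B2 x = (1/2) *\<^sub>R (E2 x + E4 x)"
        by (simp add: fun_eq_iff E2_def E4_def algebra_simps)
      then show ?thesis using e by simp
    qed
    have harmB1: "lapl m B1 x = 0" for x
    proof -
      have "Dl m B1 = (\<lambda>x. 2 *\<^sub>R A2 x)" by (rule ext) (simp add: hA2)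
      then have "Dl m (Dl m B1) x = 2 *\<^sub>R Dl m A2 x" using Dl_scale[OF l(3)] by simp
      then show ?thesis using DlDl[OF sm(2), of x] hDA2 by simp
    qed
    have harmA1: "lapl m A1 x = 0" for x
    proof -
      have "Dl m A1 = (\<lambda>x. (-2) *\<^sub>R B2 x)" by (rule ext) (simp add: hB2)
      then have "Dl m (Dl m A1) x = Dl m (\<lambda>x. (-2) *\<^sub>R B2 x) x" by (simp only:)
      also have "\<dots> = (-2) *\<^sub>R Dl m B2 x" by (rule Dl_scale[OF l(4)])
      finally have "Dl m (Dl m A1) x = (-2) *\<^sub>R Dl m B2 x" .
      then show ?thesis using DlDl[OF sm(1), of x] hDB2 by simp
    qed
    have hi: "Dr m A1 x + B1 x + Ro m 1 (Lo m 1 (B1 x)) = 0" for x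
    proof -
      have "Dr m A1 x + B1 x + Ro m 1 (Lo m 1 (B1 x)) = (1/2) *\<^sub>R (F1 x + Lo m 1 (F3 x))"
        by (simp add: F1_def F3_def opn LL1 LR1 cin) (simp add: fun_eq_iff algebra_simps)
      then show ?thesis using e by (simp add: Lo_zero)
    qed
    have hii: "Dr m B1 x - A1 x - Ro m 1 (Lo m 1 (A1 x)) = 0" for x
    proof -
      have "Dr m B1 x - A1 x - Ro m 1 (Lo m 1 (A1 x)) = (1/2) *\<^sub>R (F2 x - Lo m 1 (F4 x))"
        by (simp add: F2_def F4_def opn LL1 LR1 cin) (simp add: fun_eq_iff algebra_simps)
      then show ?thesis using e by (simp add: Lo_zero)
    qed
    show "(\<forall>x. lapl m A1 x = 0) \<and> (\<forall>x. lapl m B1 x = 0) \<and>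
     (\<forall>x. Dr m A1 x + B1 x + Ro m 1 (Lo m 1 (B1 x)) = 0) \<and>
     (\<forall>x. Dr m B1 x - A1 x - Ro m 1 (Lo m 1 (A1 x)) = 0) \<and>
     (\<forall>x. A2 x = (1/2) *\<^sub>R Dl m B1 x) \<and> (\<forall>x. B2 x = (-1/2) *\<^sub>R Dl m A1 x)"
      using harmA1 harmB1 hi hii hA2 hB2 by blast
  next
    assume H: "(\<forall>x. lapl m A1 x = 0) \<and> (\<forall>x. lapl m B1 x = 0) \<and>
     (\<forall>x. Dr m A1 x + B1 x + Ro m 1 (Lo m 1 (B1 x)) = 0) \<and>
     (\<forall>x. Dr m B1 x - A1 x - Ro m 1 (Lo m 1 (A1 x)) = 0) \<and>
     (\<forall>x. A2 x = (1/2) *\<^sub>R Dl m B1 x) \<and> (\<forall>x. B2 x = (-1/2) *\<^sub>R Dl m A1 x)"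
    then have harmA1: "lapl m A1 x = 0" and harmB1: "lapl m B1 x = 0"
      and hi: "Dr m A1 x + B1 x + Ro m 1 (Lo m 1 (B1 x)) = 0"
      and hii: "Dr m B1 x - A1 x - Ro m 1 (Lo m 1 (A1 x)) = 0"
      and hA2: "A2 x = (1/2) *\<^sub>R Dl m B1 x" and hB2: "B2 x = (-1/2) *\<^sub>R Dl m A1 x" for x
      by auto
    have A2eq: "A2 = (\<lambda>x. (1/2) *\<^sub>R Dl m B1 x)" by (rule ext) (rule hA2)
    have B2eq: "B2 = (\<lambda>x. (-1/2) *\<^sub>R Dl m A1 x)" by (rule ext) (rule hB2)
    have DrB1eq: "Dr m B1 = (\<lambda>x. A1 x + Ro m 1 (Lo m 1 (A1 x)))"
    proof (rule ext)
      fix x show "Dr m B1 x = A1 x + Ro m 1 (Lo m 1 (A1 x))" using hii[of x] by (simp add: algebra_simps)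
    qed
    have DrA1eq: "Dr m A1 = (\<lambda>x. - B1 x - Ro m 1 (Lo m 1 (B1 x)))"
    proof (rule ext)
      fix x
      have "Dr m A1 x = (Dr m A1 x + B1 x + Ro m 1 (Lo m 1 (B1 x))) - B1 x - Ro m 1 (Lo m 1 (B1 x))" by simp
      also have "\<dots> = 0 - B1 x - Ro m 1 (Lo m 1 (B1 x))" by (simp only: hi)
      finally show "Dr m A1 x = - B1 x - Ro m 1 (Lo m 1 (B1 x))" by simp
    qed
    have hDA2: "Dl m A2 x = 0" for x
    proof -
      have "Dl m A2 x = Dl m (\<lambda>x. (1/2) *\<^sub>R Dl m B1 x) x" using A2eq by simp
      also have "\<dots> = (1/2) *\<^sub>R Dl m (Dl m B1) x" by (rule Dl_scale[OF lD(2)])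
      finally show ?thesis using DlDl[OF sm(2), of x] harmB1 by simp
    qed
    have hDB2: "Dl m B2 x = 0" for x
    proof -
      have "Dl m B2 x = Dl m (\<lambda>x. (-1/2) *\<^sub>R Dl m A1 x) x" using B2eq by simp
      also have "\<dots> = (-1/2) *\<^sub>R Dl m (Dl m A1) x" by (rule Dl_scale[OF lD(1)])
      finally show ?thesis using DlDl[OF sm(1), of x] harmA1 by simp
    qed
    have lLA1: "ldiff m (\<lambda>x. Lo m 1 (A1 x))" "ldiff m (\<lambda>x. Ro m 1 (Lo m 1 (A1 x)))"
      using l(1) by (auto intro: ldiff_Lo ldiff_Ro)
    have lLB1: "ldiff m (\<lambda>x. Lo m 1 (B1 x))" "ldiff m (\<lambda>x. Ro m 1 (Lo m 1 (B1 x)))" "ldiff m (\<lambda>x. - B1 x)"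
      using l(2) by (auto intro: ldiff_Lo ldiff_Ro ldiff_neg)
    have hDrA2: "Dr m A2 x = (1/2) *\<^sub>R (Dl m A1 x - Ro m 1 (Lo m 1 (Dl m A1 x)))" for x
    proof -
      have "Dr m A2 x = Dr m (\<lambda>x. (1/2) *\<^sub>R Dl m B1 x) x" using A2eq by simp
      also have "\<dots> = (1/2) *\<^sub>R Dr m (Dl m B1) x" by (rule Dr_scale[OF lD(2)])
      also have "Dr m (Dl m B1) x = Dl m (Dr m B1) x" by (rule DlDr[OF sm(2), symmetric])
      also have "\<dots> = Dl m A1 x + Dl m (\<lambda>x. Ro m 1 (Lo m 1 (A1 x))) x"
        unfolding DrB1eq by (rule Dl_add[OF l(1) lLA1(2)])
      also have "Dl m (\<lambda>x. Ro m 1 (Lo m 1 (A1 x))) x = Ro m 1 (Dl m (\<lambda>x. Lo m 1 (A1 x)) x)"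
        by (rule Dl_R[OF lLA1(1) m2])
      also have "Dl m (\<lambda>x. Lo m 1 (A1 x)) x = - Lo m 1 (Dl m A1 x)"
        by (rule Dl_L[OF l(1) m2])
      finally show ?thesis by (simp only: Ro_neg diff_conv_add_uminus)
    qed
    have hDrB2: "Dr m B2 x = (1/2) *\<^sub>R (Dl m B1 x - Ro m 1 (Lo m 1 (Dl m B1 x)))" for x
    proof -
      have "Dr m B2 x = Dr m (\<lambda>x. (-1/2) *\<^sub>R Dl m A1 x) x" using B2eq by simp
      also have "\<dots> = (-1/2) *\<^sub>R Dr m (Dl m A1) x" by (rule Dr_scale[OF lD(1)])
      also have "Dr m (Dl m A1) x = Dl m (Dr m A1) x" by (rule DlDr[OF sm(1), symmetric])
      also have "\<dots> = Dl m (\<lambda>x. - B1 x) x - Dl m (\<lambda>x. Ro m 1 (Lo m 1 (B1 x))) x"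
        unfolding DrA1eq by (rule Dl_diff[OF lLB1(3) lLB1(2)])
      also have "Dl m (\<lambda>x. - B1 x) x = - Dl m B1 x" by (rule Dl_neg[OF l(2)])
      also have "Dl m (\<lambda>x. Ro m 1 (Lo m 1 (B1 x))) x = Ro m 1 (Dl m (\<lambda>x. Lo m 1 (B1 x)) x)"
        by (rule Dl_R[OF lLB1(1) m2])
      also have "Dl m (\<lambda>x. Lo m 1 (B1 x)) x = - Lo m 1 (Dl m B1 x)"
        by (rule Dl_L[OF l(2) m2])
      finally show ?thesis by (simp only: Ro_neg) (simp add: fun_eq_iff algebra_simps)
    qed
    have hiii: "B2 x - Ro m 1 (Lo m 1 (B2 x)) + Dr m A2 x = 0" for x
      unfolding hDrA2 hB2 by (simp add: opn) (simp add: fun_eq_iff algebra_simps)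
    have hiv: "Dr m B2 x - A2 x + Ro m 1 (Lo m 1 (A2 x)) = 0" for x
      unfolding hDrB2 hA2 by (simp add: opn) (simp add: fun_eq_iff algebra_simps)
    have E0: "E1 x = 0 \<and> E2 x = 0 \<and> E3 x = 0 \<and> E4 x = 0" for x
      unfolding E1_def E2_def E3_def E4_def using hDA2[of x] hDB2[of x]
      by (simp add: hA2 hB2)
    have F0: "F1 x = 0 \<and> F2 x = 0 \<and> F3 x = 0 \<and> F4 x = 0" for x
    proof -
      have "F1 x = (Dr m A1 x + B1 x + Ro m 1 (Lo m 1 (B1 x))) + (B2 x - Ro m 1 (Lo m 1 (B2 x)) + Dr m A2 x)"
        by (simp add: F1_def algebra_simps)
      moreover have "F2 x = (Dr m B1 x - A1 x - Ro m 1 (Lo m 1 (A1 x))) + (Dr m B2 x - A2 x + Ro m 1 (Lo m 1 (A2 x)))"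
        by (simp add: F2_def algebra_simps)
      moreover have "F3 x = Lo m 1 ((B2 x - Ro m 1 (Lo m 1 (B2 x)) + Dr m A2 x) - (Dr m A1 x + B1 x + Ro m 1 (Lo m 1 (B1 x))))"
        by (simp add: F3_def opn LL1 LR1 cin, (simp add: fun_eq_iff algebra_simps)?)
      moreover have "F4 x = Lo m 1 ((Dr m B1 x - A1 x - Ro m 1 (Lo m 1 (A1 x))) - (Dr m B2 x - A2 x + Ro m 1 (Lo m 1 (A2 x))))"
        by (simp add: F4_def opn LL1 LR1 cin, (simp add: fun_eq_iff algebra_simps)?)
      ultimately show ?thesis using hi[of x] hii[of x] hiii[of x] hiv[of x] by (simp add: Lo_zero)
    qed
    show "(\<forall>x. E1 x = 0 \<and> E2 x = 0 \<and> E3 x = 0 \<and> E4 x = 0) \<and>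
      (\<forall>x. F1 x = 0 \<and> F2 x = 0 \<and> F3 x = 0 \<and> F4 x = 0)" using E0 F0 by blast
  qed
qed


section \<open>Smoothness closure\<close>

lemma smooth_line: "smooth_real m g \<Longrightarrow> set js \<subseteq> {0..m} \<Longrightarrow> j \<le> m \<Longrightarrow>
  (\<lambda>t. iter_pdr js g (y(j:=t))) differentiable (at (y j))"
  unfolding smooth_real_def by auto

lemma iter_pdr_add:
  assumes f: "smooth_real m f" and g: "smooth_real m g"
  shows "set js \<subseteq> {0..m} \<Longrightarrow> iter_pdr js (\<lambda>x. f x + g x) = (\<lambda>x. iter_pdr js f x + iter_pdr js g x)"
proof (induction js)
  case Nil then show ?case by simp
next
  case (Cons j js)
  then have js: "set js \<subseteq> {0..m}" and j: "j \<le> m" by auto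
  show ?case
  proof (rule ext)
    fix y
    have "iter_pdr (j # js) (\<lambda>x. f x + g x) y = pdr j (\<lambda>x. iter_pdr js f x + iter_pdr js g x) y"
      using Cons(1)[OF js] by simp
    also have "\<dots> = iter_pdr (j # js) f y + iter_pdr (j # js) g y"
      unfolding pdr_def
      by (rule DERIV_imp_deriv, rule DERIV_add)
         (use iter_line_deriv[OF f js j] iter_line_deriv[OF g js j] in \<open>auto simp: pdr_def\<close>)
    finally show "iter_pdr (j # js) (\<lambda>x. f x + g x) y = iter_pdr (j # js) f y + iter_pdr (j # js) g y" .
  qed
qed

lemma iter_pdr_cmult:
  assumes f: "smooth_real m f"
  shows "set js \<subseteq> {0..m} \<Longrightarrow> iter_pdr js (\<lambda>x. c * f x) = (\<lambda>x. c * iter_pdr js f x)"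
proof (induction js)
  case Nil then show ?case by simp
next
  case (Cons j js)
  then have js: "set js \<subseteq> {0..m}" and j: "j \<le> m" by auto
  show ?case
  proof (rule ext)
    fix y
    have "iter_pdr (j # js) (\<lambda>x. c * f x) y = pdr j (\<lambda>x. c * iter_pdr js f x) y"
      using Cons(1)[OF js] by simp
    also have "\<dots> = c * iter_pdr (j # js) f y"
      unfolding pdr_def
      by (rule DERIV_imp_deriv, rule DERIV_cmult)
         (use iter_line_deriv[OF f js j] in \<open>auto simp: pdr_def\<close>)
    finally show "iter_pdr (j # js) (\<lambda>x. c * f x) y = c * iter_pdr (j # js) f y" .
  qed
qed

lemma iter_pdr_zero: "iter_pdr js (\<lambda>x. 0) = (\<lambda>x. 0)"
  by (induction js) (auto simp: pdr_def fun_eq_iff)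

lemma iter_pdr_pdr: "iter_pdr js (pdr j g) = iter_pdr (js @ [j]) g"
  by (induction js) auto

lemma smooth_real_add: "smooth_real m f \<Longrightarrow> smooth_real m g \<Longrightarrow> smooth_real m (\<lambda>x. f x + g x)"
  unfolding smooth_real_def[of m "\<lambda>x. f x + g x"]
  by (auto simp: iter_pdr_add smooth_line intro!: continuous_intros
       intro: smooth_real_def[THEN iffD1, rule_format, THEN conjunct1])

lemma smooth_real_cmult: "smooth_real m f \<Longrightarrow> smooth_real m (\<lambda>x. c * f x)"
  unfolding smooth_real_def[of m "\<lambda>x. c * f x"]
  by (auto simp: iter_pdr_cmult smooth_line intro!: continuous_intros
       intro: smooth_real_def[THEN iffD1, rule_format, THEN conjunct1])

lemma smooth_real_zero: "smooth_real m (\<lambda>x. 0)"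
  unfolding smooth_real_def by (simp add: iter_pdr_zero)

lemma smooth_real_pdr: "smooth_real m g \<Longrightarrow> j \<le> m \<Longrightarrow> smooth_real m (pdr j g)"
  unfolding smooth_real_def iter_pdr_pdr by auto

lemma smooth_cl_add: "smooth_cl m f \<Longrightarrow> smooth_cl m g \<Longrightarrow> smooth_cl m (\<lambda>x. f x + g x)"
  unfolding smooth_cl_def by (auto intro: cl_in_add smooth_real_add)

lemma smooth_cl_scale: "smooth_cl m f \<Longrightarrow> smooth_cl m (\<lambda>x. r *\<^sub>R f x)"
  unfolding smooth_cl_def by (auto intro: cl_in_scale smooth_real_cmult)

lemma smooth_cl_diff: assumes "smooth_cl m f" "smooth_cl m g" shows "smooth_cl m (\<lambda>x. f x - g x)"
proof -
  have "smooth_cl m (\<lambda>x. f x + (-1) *\<^sub>R g x)" by (intro smooth_cl_add smooth_cl_scale assms)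
  then show ?thesis by simp
qed

lemma smooth_cl_zero: "smooth_cl m (\<lambda>x. 0)"
  unfolding smooth_cl_def by (simp add: cl_in_zero smooth_real_zero)

lemma smooth_cl_Lo: assumes "smooth_cl m f" shows "smooth_cl m (\<lambda>x. Lo m k (f x))"
  unfolding smooth_cl_def
proof (intro conjI allI)
  fix A
  show "smooth_real m (\<lambda>x. Lo m k (f x) A)"
  proof (cases "A \<subseteq> {1..m}")
    case True
    have "smooth_real m (\<lambda>x. cl_sign {k} (sd A {k}) * f x (sd A {k}))"
      using assms by (intro smooth_real_cmult) (simp add: smooth_cl_def)
    then show ?thesis using True by (simp add: Lo_apply)
  next
    case False then show ?thesis by (simp add: Lo_apply smooth_real_zero)
  qed
qed (simp add: cl_in_Lo)

lemma smooth_cl_Ro: assumes "smooth_cl m f" shows "smooth_cl m (\<lambda>x. Ro m k (f x))"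
  unfolding smooth_cl_def
proof (intro conjI allI)
  fix A
  show "smooth_real m (\<lambda>x. Ro m k (f x) A)"
  proof (cases "A \<subseteq> {1..m}")
    case True
    have "smooth_real m (\<lambda>x. cl_sign (sd A {k}) {k} * f x (sd A {k}))"
      using assms by (intro smooth_real_cmult) (simp add: smooth_cl_def)
    then show ?thesis using True by (simp add: Ro_apply)
  next
    case False then show ?thesis by (simp add: Ro_apply smooth_real_zero)
  qed
qed (simp add: cl_in_Ro)

lemma smooth_cl_pd: assumes "smooth_cl m f" "j \<le> m" shows "smooth_cl m (pd j f)"
  unfolding smooth_cl_def
proof (intro conjI allI)
  fix A
  have "smooth_real m (pdr j (\<lambda>x. f x A))"
    using assms by (intro smooth_real_pdr) (simp_all add: smooth_cl_def)
  then show "smooth_real m (\<lambda>x. pd j f x A)" by (simp add: pd_def[abs_def])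
next
  fix x show "cl_in m (pd j f x)" using assms by (intro cl_in_pd smooth_cl_in)
qed

lemma smooth_cl_sum: "finite S \<Longrightarrow> (\<And>i. i \<in> S \<Longrightarrow> smooth_cl m (f i)) \<Longrightarrow> smooth_cl m (\<lambda>x. \<Sum>i\<in>S. f i x)"
proof (induction S rule: finite_induct)
  case empty show ?case unfolding sum.empty by (rule smooth_cl_zero)
next
  case (insert a S) then show ?case unfolding sum.insert[OF insert(1,2)] by (intro smooth_cl_add) auto
qed

lemma smooth_cl_Dl: assumes "smooth_cl m f" shows "smooth_cl m (Dl m f)"
proof -
  have "smooth_cl m (\<lambda>x. \<Sum>j\<in>{2..m}. Lo m j (pd j f x))"
    using assms by (intro smooth_cl_sum smooth_cl_Lo smooth_cl_pd) auto
  moreover have "Dl m f = (\<lambda>x. \<Sum>j\<in>{2..m}. Lo m j (pd j f x))" by (rule ext) (simp add: Dl_def)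
  ultimately show ?thesis by simp
qed


lemma pd_zero_fun: "pd j (\<lambda>x. 0) x = 0"
  by (rule pd_eqI) simp

lemma Dr_zero_fun: "Dr m (\<lambda>x. 0) x = 0"
  unfolding Dr_def by (simp add: pd_zero_fun Ro_zero)

lemma pd_P: assumes "ldiff m V" "j \<le> m"
  shows "pd j (\<lambda>x. V x - Ro m 1 (Lo m 1 (V x))) x = pd j V x - Ro m 1 (Lo m 1 (pd j V x))"
proof -
  have l1: "ldiff m (\<lambda>x. Lo m 1 (V x))" by (rule ldiff_Lo[OF assms(1)])
  have l2: "ldiff m (\<lambda>x. Ro m 1 (Lo m 1 (V x)))" by (rule ldiff_Ro[OF l1])
  show ?thesis
    by (simp only: pd_diff[OF assms(1) l2 assms(2)] pd_Ro[OF l1 assms(2)] pd_Lo[OF assms(1) assms(2)])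
qed

lemma lapl_P: assumes sm: "smooth_cl m V"
  shows "lapl m (\<lambda>x. V x - Ro m 1 (Lo m 1 (V x))) x = lapl m V x - Ro m 1 (Lo m 1 (lapl m V x))"
proof -
  have "pd j (pd j (\<lambda>x. V x - Ro m 1 (Lo m 1 (V x)))) x = pd j (pd j V) x - Ro m 1 (Lo m 1 (pd j (pd j V) x))"
    if "j \<in> {2..m}" for j
  proof -
    have j: "j \<le> m" using that by simp
    have "pd j (\<lambda>x. V x - Ro m 1 (Lo m 1 (V x))) = (\<lambda>y. pd j V y - Ro m 1 (Lo m 1 (pd j V y)))"
      by (rule ext) (rule pd_P[OF smooth_ldiff[OF sm] j])
    then show ?thesis using pd_P[OF smooth_ldiff_pd[OF sm j] j] by simp
  qed
  then show ?thesis unfolding lapl_def by (simp add: sum_subtractf Lo_sum Ro_sum)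
qed

lemma Dr_P: assumes "ldiff m V" "m \<ge> 2"
  shows "Dr m (\<lambda>x. V x - Ro m 1 (Lo m 1 (V x))) x = Dr m V x + Ro m 1 (Lo m 1 (Dr m V x))"
proof -
  have l1: "ldiff m (\<lambda>x. Lo m 1 (V x))" by (rule ldiff_Lo[OF assms(1)])
  have l2: "ldiff m (\<lambda>x. Ro m 1 (Lo m 1 (V x)))" by (rule ldiff_Ro[OF l1])
  show ?thesis
    by (simp only: Dr_diff[OF assms(1) l2] Dr_R[OF l1 assms(2)] Dr_L[OF assms(1) assms(2)] Ro_neg diff_minus_eq_add)
qed

lemma Dl_P: assumes "ldiff m V" "m \<ge> 2"
  shows "Dl m (\<lambda>x. V x - Ro m 1 (Lo m 1 (V x))) x = Dl m V x + Ro m 1 (Lo m 1 (Dl m V x))"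
proof -
  have l1: "ldiff m (\<lambda>x. Lo m 1 (V x))" by (rule ldiff_Lo[OF assms(1)])
  have l2: "ldiff m (\<lambda>x. Ro m 1 (Lo m 1 (V x)))" by (rule ldiff_Ro[OF l1])
  show ?thesis
    by (simp only: Dl_diff[OF assms(1) l2] Dl_R[OF l1 assms(2)] Dl_L[OF assms(1) assms(2)] Ro_neg diff_minus_eq_add)
qed

lemma PP: assumes "m \<ge> 1" "cl_in m v" shows "Ro m 1 (Lo m 1 (Ro m 1 (Lo m 1 v))) = v"
proof -
  have o: "(1::nat) \<in> {1..m}" using assms by simp
  have "Lo m 1 (Ro m 1 (Lo m 1 v)) = Ro m 1 (Lo m 1 (Lo m 1 v))" by (rule LR[OF o o])
  also have "\<dots> = - Ro m 1 v" using LL[OF o assms(2)] by (simp add: Ro_neg)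
  finally show ?thesis using RR[OF o assms(2)] by (simp add: Ro_neg)
qed

lemma part2:
  fixes M N :: "pt \<Rightarrow> cl"
  assumes m2: "m \<ge> 2" and sm: "smooth_cl m M" "smooth_cl m N" and dp: "dep m M" "dep m N"
    and rM: "\<And>x. Dr m M x = 0" and rN: "\<And>x. Dr m N x = 0"
  shows "two_sided_monogenic m (trig_combo m
     (\<lambda>x. M x - Ro m 1 (Lo m 1 (M x))) (\<lambda>x. N x - Ro m 1 (Lo m 1 (N x)))
     (\<lambda>x. (1/2) *\<^sub>R (Dl m N x + Ro m 1 (Lo m 1 (Dl m N x))))
     (\<lambda>x. (-1/2) *\<^sub>R (Dl m M x + Ro m 1 (Lo m 1 (Dl m M x)))))"
proof -
  have m1: "m \<ge> 1" using m2 by simp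
  let ?P = "\<lambda>v. Ro m 1 (Lo m 1 v)"
  have lM: "ldiff m M" and lN: "ldiff m N" using sm by (auto intro: smooth_ldiff)
  have cM: "cl_in m (M x)" and cN: "cl_in m (N x)" for x using sm by (auto intro: smooth_cl_in)
  have smP: "smooth_cl m (\<lambda>x. V x - ?P (V x))" if "smooth_cl m V" for V
    using that by (intro smooth_cl_diff smooth_cl_Ro smooth_cl_Lo)
  have smQ: "smooth_cl m (\<lambda>x. r *\<^sub>R (Dl m V x + ?P (Dl m V x)))" if "smooth_cl m V" for V r
    using that by (intro smooth_cl_scale smooth_cl_add smooth_cl_Ro smooth_cl_Lo smooth_cl_Dl)
  have dpP: "dep m (\<lambda>x. V x - ?P (V x))" if "dep m V" for V
    using that by (rule dep_comp)
  have dpQ: "dep m (\<lambda>x. r *\<^sub>R (Dl m V x + ?P (Dl m V x)))" if "dep m V" for V r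
    using dep_Dl[OF that] by (rule dep_comp)
  have harm: "lapl m V x = 0" if "smooth_cl m V" "\<And>x. Dr m V x = 0" for V x
  proof -
    have "Dr m V = (\<lambda>x. 0)" using that(2) by (rule ext)
    then have "Dr m (Dr m V) x = 0" by (simp add: Dr_zero_fun)
    then show ?thesis using DrDr[OF that(1), of x] by simp
  qed
  have harmP: "lapl m (\<lambda>x. V x - ?P (V x)) x = 0" if "smooth_cl m V" "\<And>x. Dr m V x = 0" for V x
    using lapl_P[OF that(1), of x] harm[OF that] by (simp add: Lo_zero Ro_zero)
  have DrP: "Dr m (\<lambda>x. V x - ?P (V x)) x = 0" if "ldiff m V" "\<And>x. Dr m V x = 0" for V x
    using Dr_P[OF that(1) m2, of x] that(2) by (simp add: Lo_zero Ro_zero)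
  show ?thesis
  proof (subst part1[OF m2 smP[OF sm(1)] smP[OF sm(2)] smQ[OF sm(2)] smQ[OF sm(1)]
        dpP[OF dp(1)] dpP[OF dp(2)] dpQ[OF dp(2)] dpQ[OF dp(1)]], intro conjI allI)
    fix x
    show "lapl m (\<lambda>x. M x - ?P (M x)) x = 0" by (rule harmP[OF sm(1) rM])
    show "lapl m (\<lambda>x. N x - ?P (N x)) x = 0" by (rule harmP[OF sm(2) rN])
    show "Dr m (\<lambda>x. M x - ?P (M x)) x + (N x - ?P (N x)) + ?P (N x - ?P (N x)) = 0"
      using DrP[OF lM rM, of x] PP[OF m1 cN[of x]] by (simp add: Lo_diff Ro_diff)
    show "Dr m (\<lambda>x. N x - ?P (N x)) x - (M x - ?P (M x)) - ?P (M x - ?P (M x)) = 0"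
      using DrP[OF lN rN, of x] PP[OF m1 cM[of x]] by (simp add: Lo_diff Ro_diff)
    show "(1/2) *\<^sub>R (Dl m N x + ?P (Dl m N x)) = (1/2) *\<^sub>R Dl m (\<lambda>x. N x - ?P (N x)) x"
      by (simp only: Dl_P[OF lN m2])
    show "(-1/2) *\<^sub>R (Dl m M x + ?P (Dl m M x)) = (-1/2) *\<^sub>R Dl m (\<lambda>x. M x - ?P (M x)) x"
      by (simp only: Dl_P[OF lM m2])
  qed
qed

theorem theorem2:
  fixes m :: nat and A1 B1 A2 B2 :: "pt \<Rightarrow> cl"
  assumes m2: "m \<ge> 2"
    and sm: "smooth_cl m A1" "smooth_cl m B1" "smooth_cl m A2" "smooth_cl m B2"
    and dep: "depends_only_on_y m A1" "depends_only_on_y m B1"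
             "depends_only_on_y m A2" "depends_only_on_y m B2"
  shows "(two_sided_monogenic m (trig_combo m A1 B1 A2 B2) \<longleftrightarrow>
           harmonic m A1 \<and> harmonic m B1 \<and>
           (\<forall>x. cl_add (cl_add (dY_right m A1 x) (B1 x))
                        (cl_mult m (cl_mult m (cl_e 1) (B1 x)) (cl_e 1)) = cl_zero) \<and>
           (\<forall>x. cl_sub (cl_sub (dY_right m B1 x) (A1 x))
                        (cl_mult m (cl_mult m (cl_e 1) (A1 x)) (cl_e 1)) = cl_zero) \<and>
           (\<forall>x. A2 x = cl_scale (1/2) (dY_left m B1 x)) \<and>
           (\<forall>x. B2 x = cl_scale (-1/2) (dY_left m A1 x)))
       \<and> (\<forall>M N. smooth_cl m M \<and> smooth_cl m N \<and>
              depends_only_on_y m M \<and> depends_only_on_y m N \<and>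
              (\<forall>x. dY_right m M x = cl_zero) \<and> (\<forall>x. dY_right m N x = cl_zero) \<longrightarrow>
            two_sided_monogenic m
              (trig_combo m
                 (\<lambda>x. cl_sub (M x) (cl_mult m (cl_mult m (cl_e 1) (M x)) (cl_e 1)))
                 (\<lambda>x. cl_sub (N x) (cl_mult m (cl_mult m (cl_e 1) (N x)) (cl_e 1)))
                 (\<lambda>x. cl_scale (1/2) (cl_add (dY_left m N x)
                        (cl_mult m (cl_mult m (cl_e 1) (dY_left m N x)) (cl_e 1))))
                 (\<lambda>x. cl_scale (-1/2) (cl_add (dY_left m M x)
                        (cl_mult m (cl_mult m (cl_e 1) (dY_left m M x)) (cl_e 1))))))"
proof -
  have o: "(1::nat) \<in> {1..m}" using m2 by simp
  show ?thesis
    unfolding harmonic_def lap_y_eq cl_eqs dY_left_eq dY_right_eq mult_left_e[OF o] mult_right_e[OF o]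
  proof (intro conjI allI impI)
    show "two_sided_monogenic m (trig_combo m A1 B1 A2 B2) \<longleftrightarrow>
      (\<forall>x. lapl m A1 x = 0) \<and> (\<forall>x. lapl m B1 x = 0) \<and>
      (\<forall>x. Dr m A1 x + B1 x + Ro m 1 (Lo m 1 (B1 x)) = 0) \<and>
      (\<forall>x. Dr m B1 x - A1 x - Ro m 1 (Lo m 1 (A1 x)) = 0) \<and>
      (\<forall>x. A2 x = (1/2) *\<^sub>R Dl m B1 x) \<and> (\<forall>x. B2 x = (-1/2) *\<^sub>R Dl m A1 x)"
      by (rule part1[OF m2 sm dep])
  next
    fix M N :: "pt \<Rightarrow> cl"
    assume H: "smooth_cl m M \<and> smooth_cl m N \<and> dep m M \<and> dep m N \<and>
      (\<forall>x. Dr m M x = 0) \<and> (\<forall>x. Dr m N x = 0)"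
    show "two_sided_monogenic m (trig_combo m
     (\<lambda>x. M x - Ro m 1 (Lo m 1 (M x))) (\<lambda>x. N x - Ro m 1 (Lo m 1 (N x)))
     (\<lambda>x. (1/2) *\<^sub>R (Dl m N x + Ro m 1 (Lo m 1 (Dl m N x))))
     (\<lambda>x. (-1/2) *\<^sub>R (Dl m M x + Ro m 1 (Lo m 1 (Dl m M x)))))"
      using H by (intro part2[OF m2]) auto
  qed
qed


end
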